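(* Let $G$ be a connected groupoid with finite object set $G_0=\{e_1,\dots,e_r\}$, $A=\bigoplus_{i=1}^r A_i$ a unital ring with $A_i:=A_{e_i}\neq 0$ having identity $1_i$, and $\alpha=(A_g,\alpha_g)_{g\in G}$ a unital global action of $G$ on $A$. The following are equivalent: (i) $A\subset A\star_\alpha G$ is a separable extension; (ii) $G$ is finite and there exist $a\in C(A)$ and $k\in\{1,\dots,r\}$ such that $t_k(a)=1_k$.
   Context: A groupoid $G$ is a small category in which every morphism is invertible; $G_0$ is its object set (objects identified with identity morphisms), $s,t$ source and target; $gh$ is defined iff $s(g)=t(h)$; $G(e,f)$ is the set of morphisms from $e$ to $f$; $G$ is connected if $G(e,f)\neq\emptyset$ for all $e,f\in G_0$. A unital partial action of $G$ on $A$ is a family $\alpha=(A_g,\alpha_g)_{g\in G}$ where $A_{t(g)}$ is a two-sided ideal of $A$, $A_g=A1_g$ is a two-sided ideal of $A_{t(g)}$ with $1_g$ a central idempotent of $A$, $\alpha_g:A_{g^{-1}}\to A_g$ a ring isomorphism, such that $\alpha_e=\mathrm{id}_{A_e}$ for $e\in G_0$, $\alpha_h^{-1}(A_{g^{-1}}\cap A_h)\subseteq A_{(gh)^{-1}}$ and $\alpha_g(\alpha_h(x))=\alpha_{gh}(x)$ for $x\in\alpha_h^{-1}(A_{g^{-1}}\cap A_h)$, whenever $s(g)=t(h)$. It is global if $\alpha_g\alpha_h=\alpha_{gh}$ for all composable $g,h$; equivalently $A_g=A_{t(g)}$ for all $g\in G$. The skew groupoid ring $A\star_\alpha G=\bigoplus_{g\in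 G}A_g\delta_g$ has multiplication $(a_g\delta_g)(b_h\delta_h)=\alpha_g(\alpha_{g^{-1}}(a_g)b_h)\delta_{gh}$ if $s(g)=t(h)$ and $0$ otherwise; it is unital with $1=\sum_{e\in G_0}1_e\delta_e$, and $A$ is regarded as a subring via $a\mapsto\sum_{e\in G_0}(a1_e)\delta_e$. For finite $G$, trace maps: $t_{i,j}(a)=\sum_{g\in G(e_i,e_j)}\alpha_g(a1_{g^{-1}})$ and $t_j(a)=\sum_{i=1}^r t_{i,j}(a)$. $C(A)$ is the center of $A$. A ring extension $R\subseteq S$ is separable if the multiplication map $S\otimes_R S\to S$ splits as a map of $(S,S)$-bimodules; equivalently there exists $x\in S\otimes_R S$ with $m(x)=1_S$ and $sx=xs$ for all $s\in S$. *)

theory Defs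
  imports Main "HOL-Library.FuncSet"
begin

record 'g groupoid =
  mor  :: "'g set"
  src  :: "'g \<Rightarrow> 'g"
  tgt  :: "'g \<Rightarrow> 'g"
  comp :: "'g \<Rightarrow> 'g \<Rightarrow> 'g"

definition groupoid :: "('g, 'x) groupoid_scheme \<Rightarrow> bool" where
  "groupoid G \<longleftrightarrow>
     (\<forall>g\<in>mor G. src G g \<in> mor G \<and> tgt G g \<in> mor G \<and>
        src G (src G g) = src G g \<and> tgt G (src G g) = src G g \<and>
        src G (tgt G g) = tgt G g \<and> tgt G (tgt G g) = tgt G g) \<and>
     (\<forall>g\<in>mor G. \<forall>h\<in>mor G. src G g = tgt G h \<longrightarrow>
        comp G g h \<in> mor G \<and> src G (comp G g h) = src G h \<and> tgt G (comp G g h) = tgt G g) \<and>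
     (\<forall>f\<in>mor G. \<forall>g\<in>mor G. \<forall>h\<in>mor G. src G f = tgt G g \<and> src G g = tgt G h \<longrightarrow>
        comp G (comp G f g) h = comp G f (comp G g h)) \<and>
     (\<forall>g\<in>mor G. comp G (tgt G g) g = g \<and> comp G g (src G g) = g) \<and>
     (\<forall>g\<in>mor G. \<exists>h\<in>mor G. src G h = tgt G g \<and> tgt G h = src G g \<and>
        comp G g h = tgt G g \<and> comp G h g = src G g)"

text \<open>The object set G_0 (objects = identity morphisms).\<close>
definition objs :: "('g, 'x) groupoid_scheme \<Rightarrow> 'g set" where
  "objs G = src G ` mor G"

definition hom :: "('g, 'x) groupoid_scheme \<Rightarrow> 'g \<Rightarrow> 'g \<Rightarrow> 'g set" where
  "hom G e f = {g \<in> mor G. src G g = e \<and> tgt G g = f}"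

definition connected_groupoid :: "('g, 'x) groupoid_scheme \<Rightarrow> bool" where
  "connected_groupoid G \<longleftrightarrow> (\<forall>e\<in>objs G. \<forall>f\<in>objs G. hom G e f \<noteq> {})"

definition ginv :: "('g, 'x) groupoid_scheme \<Rightarrow> 'g \<Rightarrow> 'g" where
  "ginv G g = (SOME h. h \<in> mor G \<and> src G h = tgt G g \<and> tgt G h = src G g \<and>
                 comp G g h = tgt G g \<and> comp G h g = src G g)"

text \<open>\<iota> e is the central idempotent 1_e; the ideal A_e = A 1_e.\<close>
definition ideal_at :: "('g \<Rightarrow> 'a::ring_1) \<Rightarrow> 'g \<Rightarrow> 'a set" where
  "ideal_at \<iota> e = range (\<lambda>a. a * \<iota> e)"

definition center :: "'a::ring_1 set" where
  "center = {a. \<forall>b. a * b = b * a}"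

definition direct_sum_decomp :: "('g, 'x) groupoid_scheme \<Rightarrow> ('g \<Rightarrow> 'a::ring_1) \<Rightarrow> bool" where
  "direct_sum_decomp G \<iota> \<longleftrightarrow>
     (\<forall>a. \<exists>!f. f \<in> (\<Pi>\<^sub>E e\<in>objs G. ideal_at \<iota> e) \<and> a = (\<Sum>e\<in>objs G. f e))"

text \<open>Unital global action: A_g = A_{t(g)} = A 1_{t(g)}, with 1_e central idempotents,
  alpha_g : A_{g^-1} = A_{s(g)} \<rightarrow> A_g = A_{t(g)} a ring isomorphism, alpha_e = id,
  alpha_g alpha_h = alpha_{gh}.\<close>
definition global_action ::
    "('g, 'x) groupoid_scheme \<Rightarrow> ('g \<Rightarrow> 'a::ring_1) \<Rightarrow> ('g \<Rightarrow> 'a \<Rightarrow> 'a) \<Rightarrow> bool" where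
  "global_action G \<iota> \<alpha> \<longleftrightarrow>
     (\<forall>e\<in>objs G. \<iota> e * \<iota> e = \<iota> e \<and> \<iota> e \<in> center) \<and>
     (\<forall>g\<in>mor G. bij_betw (\<alpha> g) (ideal_at \<iota> (src G g)) (ideal_at \<iota> (tgt G g)) \<and>
        (\<forall>x\<in>ideal_at \<iota> (src G g). \<forall>y\<in>ideal_at \<iota> (src G g).
           \<alpha> g (x + y) = \<alpha> g x + \<alpha> g y \<and> \<alpha> g (x * y) = \<alpha> g x * \<alpha> g y)) \<and>
     (\<forall>e\<in>objs G. \<forall>x\<in>ideal_at \<iota> e. \<alpha> e x = x) \<and>
     (\<forall>g\<in>mor G. \<forall>h\<in>mor G. src G g = tgt G h \<longrightarrow>
        (\<forall>x\<in>ideal_at \<iota> (src G h). \<alpha> g (\<alpha> h x) = \<alpha> (comp G g h) x))"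

section \<open>Trace maps (global case: 1_{g^-1} = 1_{s(g)})\<close>

definition trace_ij ::
    "('g, 'x) groupoid_scheme \<Rightarrow> ('g \<Rightarrow> 'a::ring_1) \<Rightarrow> ('g \<Rightarrow> 'a \<Rightarrow> 'a) \<Rightarrow> 'g \<Rightarrow> 'g \<Rightarrow> 'a \<Rightarrow> 'a" where
  "trace_ij G \<iota> \<alpha> ei ej a = (\<Sum>g\<in>hom G ei ej. \<alpha> g (a * \<iota> (src G g)))"

definition trace_j ::
    "('g, 'x) groupoid_scheme \<Rightarrow> ('g \<Rightarrow> 'a::ring_1) \<Rightarrow> ('g \<Rightarrow> 'a \<Rightarrow> 'a) \<Rightarrow> 'g \<Rightarrow> 'a \<Rightarrow> 'a" where
  "trace_j G \<iota> \<alpha> ej a = (\<Sum>ei\<in>objs G. trace_ij G \<iota> \<alpha> ei ej a)"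

section \<open>The skew groupoid ring, as finitely supported functions g \<mapsto> a_g \<in> A_g\<close>

definition skew_carrier :: "('g, 'x) groupoid_scheme \<Rightarrow> ('g \<Rightarrow> 'a::ring_1) \<Rightarrow> ('g \<Rightarrow> 'a) set" where
  "skew_carrier G \<iota> = {u. (\<forall>g. g \<notin> mor G \<longrightarrow> u g = 0) \<and> finite {g. u g \<noteq> 0} \<and>
                          (\<forall>g\<in>mor G. u g \<in> ideal_at \<iota> (tgt G g))}"

definition skew_add :: "('g \<Rightarrow> 'a::ring_1) \<Rightarrow> ('g \<Rightarrow> 'a) \<Rightarrow> ('g \<Rightarrow> 'a)" where
  "skew_add u v = (\<lambda>g. u g + v g)"

text \<open>(a_g delta_g)(b_h delta_h) = alpha_g(alpha_{g^-1}(a_g) b_h) delta_{gh} if s(g)=t(h), else 0.\<close>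
definition skew_mult ::
    "('g, 'x) groupoid_scheme \<Rightarrow> ('g \<Rightarrow> 'a::ring_1 \<Rightarrow> 'a) \<Rightarrow> ('g \<Rightarrow> 'a) \<Rightarrow> ('g \<Rightarrow> 'a) \<Rightarrow> ('g \<Rightarrow> 'a)" where
  "skew_mult G \<alpha> u v = (\<lambda>k. \<Sum>p\<in>{(g, h). g \<in> mor G \<and> h \<in> mor G \<and> u g \<noteq> 0 \<and> v h \<noteq> 0 \<and>
                                       src G g = tgt G h \<and> comp G g h = k}.
        \<alpha> (fst p) (\<alpha> (ginv G (fst p)) (u (fst p)) * v (snd p)))"

definition skew_one :: "('g, 'x) groupoid_scheme \<Rightarrow> ('g \<Rightarrow> 'a::ring_1) \<Rightarrow> ('g \<Rightarrow> 'a)" where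
  "skew_one G \<iota> = (\<lambda>g. if g \<in> objs G then \<iota> g else 0)"

definition skew_emb :: "('g, 'x) groupoid_scheme \<Rightarrow> ('g \<Rightarrow> 'a::ring_1) \<Rightarrow> 'a \<Rightarrow> ('g \<Rightarrow> 'a)" where
  "skew_emb G \<iota> a = (\<lambda>g. if g \<in> objs G then a * \<iota> g else 0)"

text \<open>S \<otimes>_R S is the free abelian group on S \<times> S modulo the subgroup generated by
  the biadditivity and R-balancedness relations.\<close>
definition tdelta :: "'s \<times> 's \<Rightarrow> ('s \<times> 's \<Rightarrow> int)" where
  "tdelta p = (\<lambda>q. if q = p then 1 else 0)"

definition tensor_gens ::
    "'s set \<Rightarrow> ('s \<Rightarrow> 's \<Rightarrow> 's) \<Rightarrow> ('s \<Rightarrow> 's \<Rightarrow> 's) \<Rightarrow> 's set \<Rightarrow> ('s \<times> 's \<Rightarrow> int) set" where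
  "tensor_gens S add mult R =
     {(\<lambda>q. tdelta (add u u', v) q - tdelta (u, v) q - tdelta (u', v) q) | u u' v.
         u \<in> S \<and> u' \<in> S \<and> v \<in> S} \<union>
     {(\<lambda>q. tdelta (u, add v v') q - tdelta (u, v) q - tdelta (u, v') q) | u v v'.
         u \<in> S \<and> v \<in> S \<and> v' \<in> S} \<union>
     {(\<lambda>q. tdelta (mult u r, v) q - tdelta (u, mult r v) q) | u r v.
         u \<in> S \<and> r \<in> R \<and> v \<in> S}"

inductive_set tensor_null ::
    "'s set \<Rightarrow> ('s \<Rightarrow> 's \<Rightarrow> 's) \<Rightarrow> ('s \<Rightarrow> 's \<Rightarrow> 's) \<Rightarrow> 's set \<Rightarrow> ('s \<times> 's \<Rightarrow> int) set"
  for S add mult R where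
    zero: "(\<lambda>_. 0) \<in> tensor_null S add mult R"
  | plus: "z \<in> tensor_null S add mult R \<Longrightarrow> w \<in> tensor_gens S add mult R \<Longrightarrow>
           (\<lambda>q. z q + w q) \<in> tensor_null S add mult R"
  | minus: "z \<in> tensor_null S add mult R \<Longrightarrow> w \<in> tensor_gens S add mult R \<Longrightarrow>
           (\<lambda>q. z q - w q) \<in> tensor_null S add mult R"

text \<open>A list xs of pairs (u_i, v_i) represents the tensor sum_i u_i \<otimes> v_i
  (every element of S \<otimes>_R S has this form).\<close>
definition formal_sum :: "('s \<times> 's) list \<Rightarrow> ('s \<times> 's \<Rightarrow> int)" where
  "formal_sum xs = (\<lambda>q. int (count_list xs q))"

text \<open>R \<subseteq> S separable: there is x in S \<otimes>_R S with m(x) = 1 and s x = x s for all s.\<close>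
definition separable_ext ::
    "'s set \<Rightarrow> ('s \<Rightarrow> 's \<Rightarrow> 's) \<Rightarrow> ('s \<Rightarrow> 's \<Rightarrow> 's) \<Rightarrow> 's \<Rightarrow> 's \<Rightarrow> 's set \<Rightarrow> bool" where
  "separable_ext S add mult zero one R \<longleftrightarrow>
     (\<exists>xs. set xs \<subseteq> S \<times> S \<and>
        foldr (\<lambda>p acc. add (mult (fst p) (snd p)) acc) xs zero = one \<and>
        (\<forall>s\<in>S. (\<lambda>q. formal_sum (map (\<lambda>p. (mult s (fst p), snd p)) xs) q
                  - formal_sum (map (\<lambda>p. (fst p, mult (snd p) s)) xs) q)
               \<in> tensor_null S add mult R))"

end

theory Submission
  imports Defs "HOL-Library.Function_Algebras"
begin

locale gpd =
  fixes G :: "('g, 'x) groupoid_scheme"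
  assumes gpd: "groupoid G"
begin

abbreviation "M \<equiv> mor G"
abbreviation "s \<equiv> src G"
abbreviation "t \<equiv> tgt G"
abbreviation "cp \<equiv> comp G"
abbreviation "iv \<equiv> ginv G"

lemma st[simp]:
  assumes "g \<in> M"
  shows "s g \<in> M" "t g \<in> M" "s (s g) = s g" "t (s g) = s g" "s (t g) = t g" "t (t g) = t g"
  using gpd assms unfolding groupoid_def by blast+

lemma cp_props[simp]:
  assumes "g \<in> M" "h \<in> M" "s g = t h"
  shows "cp g h \<in> M" "s (cp g h) = s h" "t (cp g h) = t g"
  using gpd assms unfolding groupoid_def by blast+

lemma assoc:
  assumes "f \<in> M" "g \<in> M" "h \<in> M" "s f = t g" "s g = t h"
  shows "cp (cp f g) h = cp f (cp g h)"
  using gpd assms unfolding groupoid_def by blast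

lemma unit_l[simp]: "g \<in> M \<Longrightarrow> cp (t g) g = g"
  and unit_r[simp]: "g \<in> M \<Longrightarrow> cp g (s g) = g"
  using gpd unfolding groupoid_def by blast+

lemma iv_ex: assumes "g \<in> M"
  shows "iv g \<in> M \<and> s (iv g) = t g \<and> t (iv g) = s g \<and> cp g (iv g) = t g \<and> cp (iv g) g = s g"
proof -
  from gpd assms obtain h where "h \<in> M \<and> s h = t g \<and> t h = s g \<and> cp g h = t g \<and> cp h g = s g"
    unfolding groupoid_def by blast
  then show ?thesis unfolding ginv_def by (rule someI)
qed

lemma iv[simp]:
  assumes "g \<in> M"
  shows "iv g \<in> M" "s (iv g) = t g" "t (iv g) = s g" "cp g (iv g) = t g" "cp (iv g) g = s g"
  using iv_ex[OF assms] by auto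

lemma cancel_l:
  assumes "g \<in> M" "h \<in> M" "s g = t h"
  shows "cp (iv g) (cp g h) = h"
proof -
  have "cp (iv g) (cp g h) = cp (cp (iv g) g) h" using assms assoc[of "iv g" g h] by simp
  also have "\<dots> = h" using assms unit_l[of h] by simp
  finally show ?thesis .
qed

lemma cancel_r:
  assumes "g \<in> M" "h \<in> M" "s g = t h"
  shows "cp (cp g h) (iv h) = g"
proof -
  have "cp (cp g h) (iv h) = cp g (cp h (iv h))" using assms assoc[of g h "iv h"] by simp
  also have "\<dots> = g" using assms unit_r[of g] by simp
  finally show ?thesis .
qed

lemma cancel_l2:
  assumes "g \<in> M" "h \<in> M" "t g = t h"
  shows "cp g (cp (iv g) h) = h"
proof -
  have "cp g (cp (iv g) h) = cp (cp g (iv g)) h" using assms assoc[of g "iv g" h] by simp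
  also have "\<dots> = h" using assms unit_l[of h] by simp
  finally show ?thesis .
qed

lemma cancel_r2:
  assumes "g \<in> M" "h \<in> M" "s g = s h"
  shows "cp (cp g (iv h)) h = g"
proof -
  have "cp (cp g (iv h)) h = cp g (cp (iv h) h)" using assms assoc[of g "iv h" h] by simp
  also have "\<dots> = g" using assms unit_r[of g] by simp
  finally show ?thesis .
qed

lemma iv_unique:
  assumes "g \<in> M" "h \<in> M" "s g = t h" "cp g h = t g"
  shows "h = iv g"
proof -
  have "h = cp (iv g) (cp g h)" using cancel_l[OF assms(1-3)] by simp
  also have "\<dots> = cp (iv g) (t g)" using assms by simp
  also have "\<dots> = iv g" using assms unit_r[of "iv g"] by simp
  finally show ?thesis .
qed

lemma iv_iv[simp]: "g \<in> M \<Longrightarrow> iv (iv g) = g"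
  using iv_unique[of "iv g" g] by simp

lemma objs_iff: "e \<in> objs G \<longleftrightarrow> e \<in> M \<and> s e = e"
proof
  assume "e \<in> objs G"
  then obtain g where "g \<in> M" "e = s g" unfolding objs_def by blast
  then show "e \<in> M \<and> s e = e" by simp
next
  assume "e \<in> M \<and> s e = e"
  then show "e \<in> objs G" unfolding objs_def by (metis imageI)
qed

lemma obj_M: "e \<in> objs G \<Longrightarrow> e \<in> M" and obj_s: "e \<in> objs G \<Longrightarrow> s e = e"
  and obj_t: "e \<in> objs G \<Longrightarrow> t e = e"
  unfolding objs_iff using st(4) by metis+

lemma s_obj: "g \<in> M \<Longrightarrow> s g \<in> objs G" and t_obj: "g \<in> M \<Longrightarrow> t g \<in> objs G"
  by (auto simp: objs_iff)

lemma iv_obj: "e \<in> objs G \<Longrightarrow> iv e = e"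
  using iv_unique[of e e] unit_l[of e] obj_M obj_s obj_t by metis

end

locale act = gpd G for G :: "('g, 'x) groupoid_scheme" +
  fixes \<iota> :: "'g \<Rightarrow> 'a::ring_1" and \<alpha> :: "'g \<Rightarrow> 'a \<Rightarrow> 'a"
  assumes ga: "global_action G \<iota> \<alpha>" and dsd: "direct_sum_decomp G \<iota>"
    and finO: "finite (objs G)"
begin

abbreviation "A e \<equiv> ideal_at \<iota> e"
abbreviation "Ob \<equiv> objs G"

lemma idem: "e \<in> Ob \<Longrightarrow> \<iota> e * \<iota> e = \<iota> e"
  using ga unfolding global_action_def by blast

lemma cent: "e \<in> Ob \<Longrightarrow> \<iota> e * x = x * \<iota> e"
  using ga unfolding global_action_def center_def by blast

lemma memA: "e \<in> Ob \<Longrightarrow> x \<in> A e \<longleftrightarrow> x * \<iota> e = x"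
proof
  assume e: "e \<in> Ob" and x: "x \<in> A e"
  then obtain a where "x = a * \<iota> e" unfolding ideal_at_def by blast
  then show "x * \<iota> e = x" using idem[OF e] by (simp add: mult.assoc)
next
  assume "x * \<iota> e = x" then show "x \<in> A e" unfolding ideal_at_def by (metis rangeI)
qed

lemma memA_l: "e \<in> Ob \<Longrightarrow> x \<in> A e \<Longrightarrow> \<iota> e * x = x"
  using memA cent by metis

lemma A_zero: "e \<in> Ob \<Longrightarrow> 0 \<in> A e" by (simp add: memA)
lemma A_iota: "e \<in> Ob \<Longrightarrow> \<iota> e \<in> A e" by (simp add: memA idem)
lemma A_add: "e \<in> Ob \<Longrightarrow> x \<in> A e \<Longrightarrow> y \<in> A e \<Longrightarrow> x + y \<in> A e"
  by (simp add: memA distrib_right)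
lemma A_mult_r: "e \<in> Ob \<Longrightarrow> x \<in> A e \<Longrightarrow> x * y \<in> A e"
proof -
  assume e: "e \<in> Ob" and x: "x \<in> A e"
  have "x * y * \<iota> e = x * (\<iota> e * y)" using cent[OF e] by (simp add: mult.assoc)
  also have "\<dots> = x * y" using memA[OF e] x by (simp flip: mult.assoc)
  finally show ?thesis using memA[OF e] by simp
qed
lemma A_mult_l: "e \<in> Ob \<Longrightarrow> x \<in> A e \<Longrightarrow> y * x \<in> A e"
  by (simp add: memA mult.assoc)
lemma A_times_iota: "e \<in> Ob \<Longrightarrow> x * \<iota> e \<in> A e"
  by (simp add: A_iota A_mult_l)
lemma A_sum: "e \<in> Ob \<Longrightarrow> (\<And>i. i \<in> I \<Longrightarrow> f i \<in> A e) \<Longrightarrow> sum f I \<in> A e"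
  by (induction I rule: infinite_finite_induct) (auto simp: A_zero A_add)

lemma orth: assumes e: "e \<in> Ob" and f: "f \<in> Ob" and ne: "e \<noteq> f" shows "\<iota> e * \<iota> f = 0"
proof -
  let ?y = "\<iota> e * \<iota> f"
  have ye: "?y \<in> A e" by (simp add: A_iota A_mult_r e)
  have yf: "?y \<in> A f" by (simp add: A_iota A_mult_l f)
  define f1 where "f1 = (\<lambda>e'\<in>Ob. if e' = e then ?y else 0)"
  define f2 where "f2 = (\<lambda>e'\<in>Ob. if e' = f then ?y else 0)"
  from dsd obtain F where F: "\<And>g. g \<in> (\<Pi>\<^sub>E e\<in>Ob. A e) \<and> ?y = (\<Sum>e\<in>Ob. g e) \<Longrightarrow> g = F"
    unfolding direct_sum_decomp_def by metis
  have s1: "(\<Sum>e'\<in>Ob. f1 e') = ?y"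
    unfolding f1_def using e finO by (simp add: sum.delta)
  have s2: "(\<Sum>e'\<in>Ob. f2 e') = ?y"
    unfolding f2_def using f finO by (simp add: sum.delta)
  have p1: "f1 \<in> (\<Pi>\<^sub>E e\<in>Ob. A e)" unfolding f1_def using ye A_zero by auto
  have p2: "f2 \<in> (\<Pi>\<^sub>E e\<in>Ob. A e)" unfolding f2_def using yf A_zero by auto
  have "f1 = f2" using F[of f1] F[of f2] p1 p2 s1 s2 by metis
  then have "f1 e = f2 e" by simp
  then show ?thesis unfolding f1_def f2_def using e ne by simp
qed

lemma A_iota_other: "e \<in> Ob \<Longrightarrow> f \<in> Ob \<Longrightarrow> e \<noteq> f \<Longrightarrow> x \<in> A e \<Longrightarrow> x * \<iota> f = 0"
  by (metis memA orth mult.assoc mult_zero_right)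

lemma nontriv: "Ob \<noteq> {}"
proof
  assume "Ob = {}"
  with dsd have "\<exists>!f. f \<in> (\<Pi>\<^sub>E e\<in>Ob. A e) \<and> (1::'a) = (\<Sum>e\<in>Ob. f e)"
    unfolding direct_sum_decomp_def by blast
  with \<open>Ob = {}\<close> show False by auto
qed

lemma al_maps: "g \<in> M \<Longrightarrow> x \<in> A (s g) \<Longrightarrow> \<alpha> g x \<in> A (t g)"
  using ga unfolding global_action_def bij_betw_def by blast

lemma al_add: "g \<in> M \<Longrightarrow> x \<in> A (s g) \<Longrightarrow> y \<in> A (s g) \<Longrightarrow> \<alpha> g (x + y) = \<alpha> g x + \<alpha> g y"
  using ga unfolding global_action_def by blast

lemma al_mult: "g \<in> M \<Longrightarrow> x \<in> A (s g) \<Longrightarrow> y \<in> A (s g) \<Longrightarrow> \<alpha> g (x * y) = \<alpha> g x * \<alpha> g y"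
  using ga unfolding global_action_def by blast

lemma al_obj: "e \<in> Ob \<Longrightarrow> x \<in> A e \<Longrightarrow> \<alpha> e x = x"
  using ga unfolding global_action_def by blast

lemma al_comp: "g \<in> M \<Longrightarrow> h \<in> M \<Longrightarrow> s g = t h \<Longrightarrow> x \<in> A (s h) \<Longrightarrow> \<alpha> g (\<alpha> h x) = \<alpha> (cp g h) x"
  using ga unfolding global_action_def by blast

lemma al_zero: "g \<in> M \<Longrightarrow> \<alpha> g 0 = 0"
  using al_add[of g 0 0] A_zero[OF s_obj] by simp

lemma al_sum: "g \<in> M \<Longrightarrow> (\<And>i. i \<in> I \<Longrightarrow> f i \<in> A (s g)) \<Longrightarrow> \<alpha> g (sum f I) = (\<Sum>i\<in>I. \<alpha> g (f i))"
proof (induction I rule: infinite_finite_induct)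
  case (insert i I)
  then show ?case using al_add[of g "f i" "sum f I"] A_sum[OF s_obj[of g], of I f] by simp
qed (auto simp: al_zero)

lemma al_inv: "g \<in> M \<Longrightarrow> x \<in> A (s g) \<Longrightarrow> \<alpha> (iv g) (\<alpha> g x) = x"
  using al_comp[of "iv g" g x] al_obj[OF s_obj[of g]] by simp

lemma al_inv2: "g \<in> M \<Longrightarrow> y \<in> A (t g) \<Longrightarrow> \<alpha> g (\<alpha> (iv g) y) = y"
  using al_inv[of "iv g" y] by simp

lemma al_inv_maps: "g \<in> M \<Longrightarrow> y \<in> A (t g) \<Longrightarrow> \<alpha> (iv g) y \<in> A (s g)"
  using al_maps[of "iv g" y] by simp

lemma al_unit: assumes g: "g \<in> M" shows "\<alpha> g (\<iota> (s g)) = \<iota> (t g)"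
proof -
  let ?u = "\<alpha> g (\<iota> (s g))"
  have "\<iota> (t g) = \<alpha> g (\<alpha> (iv g) (\<iota> (t g)))" using al_inv2[OF g A_iota[OF t_obj[OF g]]] by simp
  also have "\<dots> = \<alpha> g (\<iota> (s g) * \<alpha> (iv g) (\<iota> (t g)))"
    using memA_l[OF s_obj[OF g] al_inv_maps[OF g A_iota[OF t_obj[OF g]]]] by simp
  also have "\<dots> = ?u * \<iota> (t g)"
    using al_mult[OF g A_iota[OF s_obj[OF g]] al_inv_maps[OF g A_iota[OF t_obj[OF g]]]]
      al_inv2[OF g A_iota[OF t_obj[OF g]]] by simp
  also have "\<dots> = ?u" using memA[OF t_obj[OF g]] al_maps[OF g A_iota[OF s_obj[OF g]]] by simp
  finally show ?thesis by simp
qed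

lemma commA_central: assumes e: "e \<in> Ob" and y: "y \<in> A e" and c: "\<And>b. b \<in> A e \<Longrightarrow> b * y = y * b"
  shows "y \<in> center"
  unfolding center_def
proof (clarify)
  fix b
  have "y * b = (y * \<iota> e) * b" using memA[OF e] y by simp
  also have "\<dots> = y * (b * \<iota> e)" using cent[OF e] by (simp add: mult.assoc)
  also have "\<dots> = (b * \<iota> e) * y" using c[of "b * \<iota> e"] A_times_iota[OF e] by simp
  also have "\<dots> = b * y" using memA_l[OF e y] by (simp add: mult.assoc)
  finally show "y * b = b * y" by simp
qed

lemma al_central: assumes g: "g \<in> M" and a: "a \<in> center" shows "\<alpha> g (a * \<iota> (s g)) \<in> center"
proof (rule commA_central[OF t_obj[OF g] al_maps[OF g A_times_iota[OF s_obj[OF g]]]])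
  fix b assume b: "b \<in> A (t g)"
  have bi: "\<alpha> (iv g) b \<in> A (s g)" using al_inv_maps[OF g b] .
  have ai: "a * \<iota> (s g) \<in> A (s g)" using A_times_iota[OF s_obj[OF g]] .
  have "b * \<alpha> g (a * \<iota> (s g)) = \<alpha> g (\<alpha> (iv g) b) * \<alpha> g (a * \<iota> (s g))" using al_inv2[OF g b] by simp
  also have "\<dots> = \<alpha> g (\<alpha> (iv g) b * (a * \<iota> (s g)))" using al_mult[OF g bi ai] by simp
  also have "\<alpha> (iv g) b * (a * \<iota> (s g)) = (a * \<iota> (s g)) * \<alpha> (iv g) b"
  proof -
    have ac: "\<And>z. a * z = z * a" using a unfolding center_def by blast
    have "\<alpha> (iv g) b * (a * \<iota> (s g)) = a * (\<alpha> (iv g) b * \<iota> (s g))"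
      by (simp add: ac mult.assoc flip: mult.assoc[of _ a])
    also have "\<dots> = a * (\<iota> (s g) * \<alpha> (iv g) b)" using cent[OF s_obj[OF g]] by simp
    finally show ?thesis by (simp add: mult.assoc)
  qed
  also have "\<alpha> g (\<dots>) = \<alpha> g (a * \<iota> (s g)) * b" using al_mult[OF g ai bi] al_inv2[OF g b] by simp
  finally show "b * \<alpha> g (a * \<iota> (s g)) = \<alpha> g (a * \<iota> (s g)) * b" .
qed

end

definition mono :: "'g \<Rightarrow> 'a::zero \<Rightarrow> 'g \<Rightarrow> 'a" where
  "mono g c = (\<lambda>k. if k = g then c else 0)"

lemma sum_fun_app: "(sum f I) x = (\<Sum>i\<in>I. f i x)"
  by (induction I rule: infinite_finite_induct) auto

lemma skew_add_eq: "skew_add u v = u + v" by (simp add: skew_add_def plus_fun_def)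

context act
begin

abbreviation "S \<equiv> skew_carrier G \<iota>"
abbreviation "mul \<equiv> skew_mult G \<alpha>"
abbreviation "emb \<equiv> skew_emb G \<iota>"

lemma S_out: "u \<in> S \<Longrightarrow> g \<notin> M \<Longrightarrow> u g = 0"
  and S_fin: "u \<in> S \<Longrightarrow> finite {g. u g \<noteq> 0}"
  and S_val: "u \<in> S \<Longrightarrow> g \<in> M \<Longrightarrow> u g \<in> A (t g)"
  unfolding skew_carrier_def by blast+

lemma S_I: "(\<And>g. g \<notin> M \<Longrightarrow> u g = 0) \<Longrightarrow> finite {g. u g \<noteq> 0} \<Longrightarrow> (\<And>g. g \<in> M \<Longrightarrow> u g \<in> A (t g)) \<Longrightarrow> u \<in> S"
  unfolding skew_carrier_def by blast

lemma S_zero: "0 \<in> S"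
  by (rule S_I) (auto simp: A_zero t_obj)

lemma S_add: assumes "u \<in> S" "v \<in> S" shows "u + v \<in> S"
proof (rule S_I)
  show "finite {g. (u + v) g \<noteq> 0}"
    using S_fin[OF assms(1)] S_fin[OF assms(2)]
    by (rule finite_subset[rotated, OF finite_UnI]) auto
qed (auto simp: assms S_out S_val A_add t_obj)

lemma mono_S: "g \<in> M \<Longrightarrow> c \<in> A (t g) \<Longrightarrow> mono g c \<in> S"
  by (rule S_I) (auto simp: mono_def A_zero t_obj intro: finite_subset[of _ "{g}"])

lemma emb_S: "emb b \<in> S"
proof (rule S_I)
  show "finite {g. emb b g \<noteq> 0}"
    by (rule finite_subset[OF _ finO]) (auto simp: skew_emb_def split: if_splits)
qed (auto simp: skew_emb_def obj_M obj_t A_times_iota A_zero t_obj)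

lemma supp_S: "u \<in> S \<Longrightarrow> u g \<noteq> 0 \<Longrightarrow> g \<in> M"
  using S_out by blast

lemma mul_out: "k \<notin> M \<Longrightarrow> mul x y k = 0"
  unfolding skew_mult_def by (rule sum.neutral) auto

lemma term_zero1: "g \<in> M \<Longrightarrow> \<alpha> g (\<alpha> (iv g) 0 * z) = 0"
  by (simp add: al_zero)

lemma term_zero2: "g \<in> M \<Longrightarrow> \<alpha> g (z * 0) = 0"
  by (simp add: al_zero)

lemma mul_at:
  assumes x: "x \<in> S" and y: "y \<in> S" and k: "k \<in> M" and F: "finite F" "{g. x g \<noteq> 0} \<subseteq> F"
  shows "mul x y k = (\<Sum>g\<in>{g\<in>F. g \<in> M \<and> t g = t k}. \<alpha> g (\<alpha> (iv g) (x g) * y (cp (iv g) k)))"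
proof -
  let ?f = "\<lambda>p. \<alpha> (fst p) (\<alpha> (iv (fst p)) (x (fst p)) * y (snd p))"
  let ?P = "{(g, h). g \<in> M \<and> h \<in> M \<and> x g \<noteq> 0 \<and> y h \<noteq> 0 \<and> s g = t h \<and> cp g h = k}"
  let ?Q = "{g. g \<in> M \<and> x g \<noteq> 0 \<and> t g = t k \<and> y (cp (iv g) k) \<noteq> 0}"
  have P: "?P = (\<lambda>g. (g, cp (iv g) k)) ` ?Q"
  proof (rule set_eqI, rule iffI)
    fix p assume "p \<in> ?P"
    then obtain g h where p: "p = (g, h)" and g: "g \<in> M" "h \<in> M" "x g \<noteq> 0" "y h \<noteq> 0" "s g = t h" "cp g h = k"
      by blast
    then have "h = cp (iv g) k" using cancel_l by metis
    moreover have "t g = t k" using g cp_props(3) by metis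
    ultimately show "p \<in> (\<lambda>g. (g, cp (iv g) k)) ` ?Q" using g p by auto
  next
    fix p assume "p \<in> (\<lambda>g. (g, cp (iv g) k)) ` ?Q"
    then obtain g where p: "p = (g, cp (iv g) k)" and g: "g \<in> M" "x g \<noteq> 0" "t g = t k" "y (cp (iv g) k) \<noteq> 0"
      by blast
    have "cp (iv g) k \<in> M" "s g = t (cp (iv g) k)" "cp g (cp (iv g) k) = k"
      using g k cancel_l2 by auto
    then show "p \<in> ?P" using p g by auto
  qed
  have "mul x y k = sum ?f ?P" unfolding skew_mult_def by simp
  also have "\<dots> = (\<Sum>g\<in>?Q. \<alpha> g (\<alpha> (iv g) (x g) * y (cp (iv g) k)))"
    unfolding P by (subst sum.reindex) (auto simp: inj_on_def)
  also have "\<dots> = (\<Sum>g\<in>{g\<in>F. g \<in> M \<and> t g = t k}. \<alpha> g (\<alpha> (iv g) (x g) * y (cp (iv g) k)))"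
  proof (rule sum.mono_neutral_left)
    show "finite {g \<in> F. g \<in> M \<and> t g = t k}" using F by simp
    show "?Q \<subseteq> {g \<in> F. g \<in> M \<and> t g = t k}" using F by auto
    show "\<forall>i\<in>{g \<in> F. g \<in> M \<and> t g = t k} - ?Q. \<alpha> i (\<alpha> (iv i) (x i) * y (cp (iv i) k)) = 0"
      by (auto simp: al_zero)
  qed
  finally show ?thesis .
qed

lemma mul_nz: "mul x y k \<noteq> 0 \<Longrightarrow> \<exists>g h. x g \<noteq> 0 \<and> y h \<noteq> 0 \<and> cp g h = k"
proof (rule ccontr)
  assume "\<not> (\<exists>g h. x g \<noteq> 0 \<and> y h \<noteq> 0 \<and> cp g h = k)" "mul x y k \<noteq> 0"
  then show False unfolding skew_mult_def by (subst (asm) sum.neutral) auto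
qed

lemma mul_S: assumes x: "x \<in> S" and y: "y \<in> S" shows "mul x y \<in> S"
proof (rule S_I)
  show "finite {k. mul x y k \<noteq> 0}"
  proof (rule finite_subset)
    show "{k. mul x y k \<noteq> 0} \<subseteq> (\<lambda>(g, h). cp g h) ` ({g. x g \<noteq> 0} \<times> {h. y h \<noteq> 0})"
      using mul_nz by fastforce
    show "finite ((\<lambda>(g, h). cp g h) ` ({g. x g \<noteq> 0} \<times> {h. y h \<noteq> 0}))"
      using S_fin[OF x] S_fin[OF y] by simp
  qed
next
  fix k assume k: "k \<in> M"
  show "mul x y k \<in> A (t k)"
    unfolding mul_at[OF x y k S_fin[OF x] subset_refl]
  proof (rule A_sum[OF t_obj[OF k]])
    fix g assume "g \<in> {g \<in> {g. x g \<noteq> 0}. g \<in> M \<and> t g = t k}"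
    then have g: "g \<in> M" "t g = t k" by auto
    have "\<alpha> (iv g) (x g) \<in> A (s g)" using al_inv_maps[OF g(1) S_val[OF x g(1)]] .
    then have "\<alpha> (iv g) (x g) * y (cp (iv g) k) \<in> A (s g)" using A_mult_r s_obj g by blast
    then show "\<alpha> g (\<alpha> (iv g) (x g) * y (cp (iv g) k)) \<in> A (t k)" using al_maps g by metis
  qed
qed (simp add: mul_out)

end

context act
begin

lemma mul_add_l: assumes x: "x \<in> S" and x': "x' \<in> S" and y: "y \<in> S"
  shows "mul (x + x') y = mul x y + mul x' y"
proof (rule ext)
  fix k
  show "mul (x + x') y k = (mul x y + mul x' y) k"
  proof (cases "k \<in> M")
    case False then show ?thesis by (simp add: mul_out)
  next
    case k: True
    let ?F = "{g. x g \<noteq> 0} \<union> {g. x' g \<noteq> 0}"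
    have fin: "finite ?F" using S_fin[OF x] S_fin[OF x'] by simp
    have "mul (x + x') y k = (\<Sum>g\<in>{g\<in>?F. g \<in> M \<and> t g = t k}. \<alpha> g (\<alpha> (iv g) ((x + x') g) * y (cp (iv g) k)))"
      by (rule mul_at[OF S_add[OF x x'] y k fin]) auto
    also have "\<dots> = (\<Sum>g\<in>{g\<in>?F. g \<in> M \<and> t g = t k}. \<alpha> g (\<alpha> (iv g) (x g) * y (cp (iv g) k)) + \<alpha> g (\<alpha> (iv g) (x' g) * y (cp (iv g) k)))"
    proof (rule sum.cong[OF refl])
      fix g assume "g \<in> {g\<in>?F. g \<in> M \<and> t g = t k}"
      then have g: "g \<in> M" by auto
      have a1: "\<alpha> (iv g) (x g) \<in> A (s g)" using al_inv_maps[OF g S_val[OF x g]] .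
      have a2: "\<alpha> (iv g) (x' g) \<in> A (s g)" using al_inv_maps[OF g S_val[OF x' g]] .
      have "\<alpha> (iv g) ((x + x') g) = \<alpha> (iv g) (x g) + \<alpha> (iv g) (x' g)"
        using al_add[of "iv g" "x g" "x' g"] S_val[OF x g] S_val[OF x' g] g by simp
      then show "\<alpha> g (\<alpha> (iv g) ((x + x') g) * y (cp (iv g) k)) = \<alpha> g (\<alpha> (iv g) (x g) * y (cp (iv g) k)) + \<alpha> g (\<alpha> (iv g) (x' g) * y (cp (iv g) k))"
        using al_add[OF g A_mult_r[OF s_obj[OF g] a1] A_mult_r[OF s_obj[OF g] a2]] by (simp add: distrib_right)
    qed
    also have "\<dots> = mul x y k + mul x' y k"
      by (simp add: sum.distrib mul_at[OF x y k fin] mul_at[OF x' y k fin])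
    finally show ?thesis by simp
  qed
qed

lemma mul_add_r: assumes x: "x \<in> S" and y: "y \<in> S" and y': "y' \<in> S"
  shows "mul x (y + y') = mul x y + mul x y'"
proof (rule ext)
  fix k
  show "mul x (y + y') k = (mul x y + mul x y') k"
  proof (cases "k \<in> M")
    case False then show ?thesis by (simp add: mul_out)
  next
    case k: True
    let ?F = "{g. x g \<noteq> 0}"
    have fin: "finite ?F" using S_fin[OF x] by simp
    have "mul x (y + y') k = (\<Sum>g\<in>{g\<in>?F. g \<in> M \<and> t g = t k}. \<alpha> g (\<alpha> (iv g) (x g) * (y + y') (cp (iv g) k)))"
      by (rule mul_at[OF x S_add[OF y y'] k fin]) auto
    also have "\<dots> = (\<Sum>g\<in>{g\<in>?F. g \<in> M \<and> t g = t k}. \<alpha> g (\<alpha> (iv g) (x g) * y (cp (iv g) k)) + \<alpha> g (\<alpha> (iv g) (x g) * y' (cp (iv g) k)))"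
    proof (rule sum.cong[OF refl])
      fix g assume "g \<in> {g\<in>?F. g \<in> M \<and> t g = t k}"
      then have g: "g \<in> M" by auto
      have a1: "\<alpha> (iv g) (x g) \<in> A (s g)" using al_inv_maps[OF g S_val[OF x g]] .
      show "\<alpha> g (\<alpha> (iv g) (x g) * (y + y') (cp (iv g) k)) = \<alpha> g (\<alpha> (iv g) (x g) * y (cp (iv g) k)) + \<alpha> g (\<alpha> (iv g) (x g) * y' (cp (iv g) k))"
        using al_add[OF g A_mult_r[OF s_obj[OF g] a1] A_mult_r[OF s_obj[OF g] a1]] by (simp add: distrib_left)
    qed
    also have "\<dots> = mul x y k + mul x y' k"
      by (simp add: sum.distrib mul_at[OF x y k fin] mul_at[OF x y' k fin])
    finally show ?thesis by simp
  qed
qed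

lemma mono_mul_l: assumes h: "h \<in> M" and c: "c \<in> A (t h)" and y: "y \<in> S"
  shows "mul (mono h c) y k = (if k \<in> M \<and> t k = t h then \<alpha> h (\<alpha> (iv h) c * y (cp (iv h) k)) else 0)"
proof (cases "k \<in> M")
  case False then show ?thesis by (simp add: mul_out)
next
  case k: True
  have "mul (mono h c) y k = (\<Sum>g\<in>{g\<in>{h}. g \<in> M \<and> t g = t k}. \<alpha> g (\<alpha> (iv g) (mono h c g) * y (cp (iv g) k)))"
    by (rule mul_at[OF mono_S[OF h c] y k]) (auto simp: mono_def)
  also have "\<dots> = (if t k = t h then \<alpha> h (\<alpha> (iv h) c * y (cp (iv h) k)) else 0)"
  proof -
    have e: "{g\<in>{h}. g \<in> M \<and> t g = t k} = (if t k = t h then {h} else {})" using h by auto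
    show ?thesis by (subst e, cases "t k = t h") (simp_all add: mono_def)
  qed
  finally show ?thesis using k by simp
qed

lemma mul_mono_r: assumes x: "x \<in> S" and h: "h \<in> M" and d: "d \<in> A (t h)"
  shows "mul x (mono h d) k = (if k \<in> M \<and> s k = s h then
      \<alpha> (cp k (iv h)) (\<alpha> (iv (cp k (iv h))) (x (cp k (iv h))) * d) else 0)"
proof (cases "k \<in> M")
  case False then show ?thesis by (simp add: mul_out)
next
  case k: True
  let ?g0 = "cp k (iv h)"
  let ?F = "{g. x g \<noteq> 0} \<union> {?g0}"
  have fin: "finite ?F" using S_fin[OF x] by simp
  have "mul x (mono h d) k = (\<Sum>g\<in>{g\<in>?F. g \<in> M \<and> t g = t k}. \<alpha> g (\<alpha> (iv g) (x g) * mono h d (cp (iv g) k)))"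
    by (rule mul_at[OF x mono_S[OF h d] k fin]) auto
  also have "\<dots> = (\<Sum>g\<in>{g\<in>?F. g \<in> M \<and> t g = t k}. if g = ?g0 \<and> s k = s h then \<alpha> ?g0 (\<alpha> (iv ?g0) (x ?g0) * d) else 0)"
  proof (rule sum.cong[OF refl])
    fix g assume "g \<in> {g\<in>?F. g \<in> M \<and> t g = t k}"
    then have g: "g \<in> M" "t g = t k" by auto
    show "\<alpha> g (\<alpha> (iv g) (x g) * mono h d (cp (iv g) k)) = (if g = ?g0 \<and> s k = s h then \<alpha> ?g0 (\<alpha> (iv ?g0) (x ?g0) * d) else 0)"
    proof (cases "cp (iv g) k = h")
      case True
      then have sk: "s k = s h" using g k cp_props(2)[of "iv g" k] by simp
      have "cp g (cp (iv g) k) = k" using cancel_l2[OF g(1) k g(2)] .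
      then have "cp g h = k" using True by simp
      have sg: "s g = t h" using True cp_props(3)[of "iv g" k] g k by simp
      have "g = cp (cp g h) (iv h)" using cancel_r[OF g(1) h sg] by simp
      then have "g = ?g0" using \<open>cp g h = k\<close> by simp
      then show ?thesis using True sk by (simp add: mono_def)
    next
      case False
      have "cp (iv g) k = h" if gg: "g = ?g0" and sk: "s k = s h"
      proof -
        have g0: "?g0 \<in> M" "s ?g0 = t h" using h k sk by simp_all
        have "cp ?g0 h = k" using cancel_r2[OF k h sk] .
        then have "cp (iv ?g0) k = cp (iv ?g0) (cp ?g0 h)" by simp
        also have "\<dots> = h" using cancel_l[OF g0(1) h g0(2)] .
        finally show ?thesis using gg by simp
      qed
      then show ?thesis using False g by (auto simp: mono_def al_zero)
    qed
  qed
  also have "\<dots> = (if s k = s h then \<alpha> ?g0 (\<alpha> (iv ?g0) (x ?g0) * d) else 0)"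
  proof (cases "s k = s h")
    case True
    have "?g0 \<in> {g\<in>?F. g \<in> M \<and> t g = t k}" using True h k by simp
    then show ?thesis using fin True by (simp add: sum.delta[of _ ?g0])
  qed simp
  finally show ?thesis using k by simp
qed

end

context act
begin

lemma emb_mul: assumes y: "y \<in> S" shows "mul (emb b) y = (\<lambda>k. b * y k)"
proof (rule ext)
  fix k show "mul (emb b) y k = b * y k"
  proof (cases "k \<in> M")
    case False then show ?thesis by (simp add: mul_out S_out[OF y])
  next
    case k: True
    have tk: "t k \<in> Ob" using t_obj[OF k] .
    have "mul (emb b) y k = (\<Sum>g\<in>{g\<in>Ob. g \<in> M \<and> t g = t k}. \<alpha> g (\<alpha> (iv g) (emb b g) * y (cp (iv g) k)))"
      by (rule mul_at[OF emb_S y k finO]) (auto simp: skew_emb_def split: if_splits)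
    also have "{g\<in>Ob. g \<in> M \<and> t g = t k} = {t k}" using tk by (auto simp: obj_t obj_M)
    also have "(\<Sum>g\<in>{t k}. \<alpha> g (\<alpha> (iv g) (emb b g) * y (cp (iv g) k))) = \<alpha> (t k) (\<alpha> (t k) (b * \<iota> (t k)) * y k)"
      using tk k by (simp add: iv_obj skew_emb_def)
    also have "\<dots> = \<alpha> (t k) (b * \<iota> (t k) * y k)" using al_obj[OF tk A_times_iota[OF tk]] by simp
    also have "\<dots> = b * \<iota> (t k) * y k" using al_obj[OF tk] A_mult_l[OF tk S_val[OF y k]] by simp
    also have "\<dots> = b * y k" using memA_l[OF tk S_val[OF y k]] by (simp add: mult.assoc)
    finally show ?thesis .
  qed
qed

lemma mul_emb: assumes x: "x \<in> S" shows "mul x (emb b) = (\<lambda>k. x k * \<alpha> k (b * \<iota> (s k)))"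
proof (rule ext)
  fix k show "mul x (emb b) k = x k * \<alpha> k (b * \<iota> (s k))"
  proof (cases "k \<in> M")
    case False then show ?thesis by (simp add: mul_out S_out[OF x])
  next
    case k: True
    let ?F = "{g. x g \<noteq> 0} \<union> {k}"
    have fin: "finite ?F" using S_fin[OF x] by simp
    have "mul x (emb b) k = (\<Sum>g\<in>{g\<in>?F. g \<in> M \<and> t g = t k}. \<alpha> g (\<alpha> (iv g) (x g) * emb b (cp (iv g) k)))"
      by (rule mul_at[OF x emb_S k fin]) auto
    also have "\<dots> = (\<Sum>g\<in>{g\<in>?F. g \<in> M \<and> t g = t k}. if g = k then \<alpha> k (\<alpha> (iv k) (x k) * (b * \<iota> (s k))) else 0)"
    proof (rule sum.cong[OF refl])
      fix g assume "g \<in> {g\<in>?F. g \<in> M \<and> t g = t k}"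
      then have g: "g \<in> M" "t g = t k" by auto
      have m: "cp (iv g) k \<in> M" "s (cp (iv g) k) = s k" "t (cp (iv g) k) = s g" using g k by simp_all
      show "\<alpha> g (\<alpha> (iv g) (x g) * emb b (cp (iv g) k)) = (if g = k then \<alpha> k (\<alpha> (iv k) (x k) * (b * \<iota> (s k))) else 0)"
      proof (cases "cp (iv g) k \<in> Ob")
        case True
        then have e: "cp (iv g) k = s g" using m obj_t by metis
        have "k = cp g (cp (iv g) k)" using cancel_l2[OF g(1) k g(2)] by simp
        also have "\<dots> = g" using e g by simp
        finally have "g = k" by simp
        then show ?thesis using True k by (simp add: skew_emb_def)
      next
        case False
        have "g \<noteq> k" using False k by (auto simp: s_obj)
        then show ?thesis using False g by (simp add: skew_emb_def al_zero)
      qed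
    qed
    also have "\<dots> = \<alpha> k (\<alpha> (iv k) (x k) * (b * \<iota> (s k)))"
      using fin by (simp add: sum.delta'[of _ k] k)
    also have "\<dots> = x k * \<alpha> k (b * \<iota> (s k))"
      using al_mult[OF k al_inv_maps[OF k S_val[OF x k]] A_times_iota[OF s_obj[OF k]]]
        al_inv2[OF k S_val[OF x k]] by simp
    finally show ?thesis .
  qed
qed

definition uh where "uh h = mono h (\<iota> (t h))"

lemma uh_S: "h \<in> M \<Longrightarrow> uh h \<in> S"
  unfolding uh_def by (rule mono_S) (auto simp: A_iota t_obj)

lemma al_iv_unit: "h \<in> M \<Longrightarrow> \<alpha> (iv h) (\<iota> (t h)) = \<iota> (s h)"
  using al_unit[of "iv h"] by simp

lemma uh_mul: assumes h: "h \<in> M" and y: "y \<in> S"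
  shows "mul (uh h) y k = (if k \<in> M \<and> t k = t h then \<alpha> h (y (cp (iv h) k)) else 0)"
proof (cases "k \<in> M \<and> t k = t h")
  case True
  then have m: "cp (iv h) k \<in> M" "t (cp (iv h) k) = s h" using h by simp_all
  have "\<iota> (s h) * y (cp (iv h) k) = y (cp (iv h) k)"
    using memA_l[OF s_obj[OF h]] S_val[OF y m(1)] m(2) by simp
  then show ?thesis unfolding uh_def using mono_mul_l[OF h A_iota[OF t_obj[OF h]] y] True
    by (simp add: al_iv_unit[OF h])
next
  case False then show ?thesis by (auto simp: uh_def mono_mul_l[OF h A_iota[OF t_obj[OF h]] y])
qed

lemma mul_uh: assumes x: "x \<in> S" and h: "h \<in> M"
  shows "mul x (uh h) k = (if k \<in> M \<and> s k = s h then x (cp k (iv h)) else 0)"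
proof (cases "k \<in> M \<and> s k = s h")
  case True
  let ?g = "cp k (iv h)"
  have g: "?g \<in> M" "t ?g = t k" "s ?g = t h" using True h by simp_all
  have v: "\<alpha> (iv ?g) (x ?g) \<in> A (t h)" using al_inv_maps[OF g(1) S_val[OF x g(1)]] g(3) by simp
  have "\<alpha> ?g (\<alpha> (iv ?g) (x ?g) * \<iota> (t h)) = x ?g"
    using memA[OF t_obj[OF h]] v al_inv2[OF g(1) S_val[OF x g(1)]] by simp
  then show ?thesis unfolding uh_def using mul_mono_r[OF x h A_iota[OF t_obj[OF h]]] True by simp
next
  case False then show ?thesis by (auto simp: uh_def mul_mono_r[OF x h A_iota[OF t_obj[OF h]]])
qed

lemma mono_mul: assumes h: "h \<in> M" and b: "b \<in> A (t h)" and g: "g \<in> M" and c: "c \<in> A (t g)"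
  shows "mul (mono h b) (mono g c) = (if s h = t g then mono (cp h g) (\<alpha> h (\<alpha> (iv h) b * c)) else 0)"
proof (rule ext)
  fix k
  show "mul (mono h b) (mono g c) k = (if s h = t g then mono (cp h g) (\<alpha> h (\<alpha> (iv h) b * c)) else 0) k"
  proof (cases "k \<in> M \<and> t k = t h")
    case False
    have "k \<noteq> cp h g \<or> s h \<noteq> t g" using False h g by auto
    then show ?thesis using False mono_mul_l[OF h b mono_S[OF g c], of k] by (auto simp: mono_def)
  next
    case True
    have ev: "cp (iv h) k = g \<longleftrightarrow> s h = t g \<and> k = cp h g"
    proof
      assume a: "cp (iv h) k = g"
      then have "s h = t g" using True h cp_props(3)[of "iv h" k] by simp
      moreover have "k = cp h g" using cancel_l2[of h k] True h a by simp
      ultimately show "s h = t g \<and> k = cp h g" by simp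
    next
      assume "s h = t g \<and> k = cp h g"
      then show "cp (iv h) k = g" using cancel_l[OF h g] by simp
    qed
    show ?thesis using mono_mul_l[OF h b mono_S[OF g c], of k] True ev
      by (auto simp: mono_def al_zero[OF h])
  qed
qed

end

lemma tnull_plus_gen: "z \<in> tensor_null S ad mu R \<Longrightarrow> w \<in> tensor_gens S ad mu R \<Longrightarrow> z + w \<in> tensor_null S ad mu R"
  using tensor_null.plus[of z S ad mu R w] by (simp add: plus_fun_def)

lemma tnull_minus_gen: "z \<in> tensor_null S ad mu R \<Longrightarrow> w \<in> tensor_gens S ad mu R \<Longrightarrow> z - w \<in> tensor_null S ad mu R"
  using tensor_null.minus[of z S ad mu R w] by (simp add: fun_diff_def)

lemma tnull_zero: "0 \<in> tensor_null S ad mu R"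
  using tensor_null.zero by (simp add: zero_fun_def)

lemma tnull_gen: "w \<in> tensor_gens S ad mu R \<Longrightarrow> w \<in> tensor_null S ad mu R"
  using tnull_plus_gen[OF tnull_zero] by simp

lemma tnull_add: assumes "z \<in> tensor_null S ad mu R" "w \<in> tensor_null S ad mu R"
  shows "z + w \<in> tensor_null S ad mu R"
  using assms(2)
proof (induction w rule: tensor_null.induct)
  case zero then show ?case using assms(1) by (simp add: zero_fun_def[symmetric])
next
  case (plus w g)
  have e: "z + (\<lambda>q. w q + g q) = (z + w) + g" by (simp add: plus_fun_def add.assoc)
  show ?case by (subst e) (rule tnull_plus_gen[OF plus.IH plus.hyps(2)])
next
  case (minus w g)
  have e: "z + (\<lambda>q. w q - g q) = (z + w) - g" by (simp add: plus_fun_def fun_diff_def algebra_simps)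
  show ?case by (subst e) (rule tnull_minus_gen[OF minus.IH minus.hyps(2)])
qed

lemma tnull_uminus: assumes "z \<in> tensor_null S ad mu R" shows "- z \<in> tensor_null S ad mu R"
  using assms
proof (induction z rule: tensor_null.induct)
  case zero then show ?case using tnull_zero by (simp add: zero_fun_def)
next
  case (plus w g)
  have e: "- (\<lambda>q. w q + g q) = (- w) - g" by (simp add: fun_Compl_def fun_diff_def)
  show ?case by (subst e) (rule tnull_minus_gen[OF plus.IH plus.hyps(2)])
next
  case (minus w g)
  have e: "- (\<lambda>q. w q - g q) = (- w) + g" by (simp add: fun_Compl_def plus_fun_def)
  show ?case by (subst e) (rule tnull_plus_gen[OF minus.IH minus.hyps(2)])
qed

lemma tnull_diff: "z \<in> tensor_null S ad mu R \<Longrightarrow> w \<in> tensor_null S ad mu R \<Longrightarrow> z - w \<in> tensor_null S ad mu R"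
  by (subst diff_conv_add_uminus) (rule tnull_add[OF _ tnull_uminus])

lemma tnull_sum: "(\<And>i. i \<in> I \<Longrightarrow> f i \<in> tensor_null S ad mu R) \<Longrightarrow> sum f I \<in> tensor_null S ad mu R"
  by (induction I rule: infinite_finite_induct) (auto simp: tnull_zero tnull_add)

lemma tnull_sum_list: "(\<And>p. p \<in> set xs \<Longrightarrow> f p \<in> tensor_null S ad mu R) \<Longrightarrow> sum_list (map f xs) \<in> tensor_null S ad mu R"
  by (induction xs) (auto simp: tnull_zero tnull_add)

lemma gen_l: "u \<in> S \<Longrightarrow> u' \<in> S \<Longrightarrow> v \<in> S \<Longrightarrow>
   tdelta (ad u u', v) - tdelta (u, v) - tdelta (u', v) \<in> tensor_null S ad mu R"
  unfolding fun_diff_def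
  by (rule tnull_gen, unfold tensor_gens_def, rule UnI1, rule UnI1) blast

lemma gen_r: "u \<in> S \<Longrightarrow> v \<in> S \<Longrightarrow> v' \<in> S \<Longrightarrow>
   tdelta (u, ad v v') - tdelta (u, v) - tdelta (u, v') \<in> tensor_null S ad mu R"
  unfolding fun_diff_def
  by (rule tnull_gen, unfold tensor_gens_def, rule UnI1, rule UnI2) blast

lemma gen_b: "u \<in> S \<Longrightarrow> r \<in> R \<Longrightarrow> v \<in> S \<Longrightarrow>
   tdelta (mu u r, v) - tdelta (u, mu r v) \<in> tensor_null S ad mu R"
  unfolding fun_diff_def
  by (rule tnull_gen, unfold tensor_gens_def, rule UnI2) blast

lemma sum_list_fun_app: "(sum_list (map f xs)) x = (\<Sum>p\<leftarrow>xs. f p x)"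
  by (induction xs) auto

lemma formal_sum_eq: "formal_sum (map f xs) = sum_list (map (\<lambda>p. tdelta (f p)) xs)"
proof (rule ext)
  fix q
  show "formal_sum (map f xs) q = sum_list (map (\<lambda>p. tdelta (f p)) xs) q"
    unfolding sum_list_fun_app formal_sum_def
    by (induction xs) (auto simp: tdelta_def)
qed

section \<open>Functionals on formal sums\<close>

definition Phi :: "('s \<times> 's \<Rightarrow> 'b::ring_1) \<Rightarrow> ('s \<times> 's \<Rightarrow> int) \<Rightarrow> 'b" where
  "Phi \<phi> z = (\<Sum>q\<in>{q. z q \<noteq> 0}. of_int (z q) * \<phi> q)"

lemma Phi_superset: "finite F \<Longrightarrow> {q. z q \<noteq> 0} \<subseteq> F \<Longrightarrow> Phi \<phi> z = (\<Sum>q\<in>F. of_int (z q) * \<phi> q)"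
  unfolding Phi_def by (rule sum.mono_neutral_left) auto

lemma Phi_add: assumes "finite {q. z q \<noteq> 0}" "finite {q. w q \<noteq> 0}"
  shows "Phi \<phi> (z + w) = Phi \<phi> z + Phi \<phi> w"
proof -
  let ?F = "{q. z q \<noteq> 0} \<union> {q. w q \<noteq> 0}"
  have f: "finite ?F" using assms by simp
  have "Phi \<phi> (z + w) = (\<Sum>q\<in>?F. of_int ((z + w) q) * \<phi> q)" by (rule Phi_superset[OF f]) auto
  also have "\<dots> = (\<Sum>q\<in>?F. of_int (z q) * \<phi> q) + (\<Sum>q\<in>?F. of_int (w q) * \<phi> q)"
    by (simp add: sum.distrib distrib_right)
  also have "\<dots> = Phi \<phi> z + Phi \<phi> w" by (simp add: Phi_superset[OF f])
  finally show ?thesis .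
qed

lemma Phi_uminus: "Phi \<phi> (- z) = - Phi \<phi> z"
  unfolding Phi_def by (simp add: fun_Compl_def sum_negf)

lemma fin_add: "finite {q. z q \<noteq> (0::int)} \<Longrightarrow> finite {q. w q \<noteq> 0} \<Longrightarrow> finite {q. (z + w) q \<noteq> 0}"
  by (rule finite_subset[of _ "{q. z q \<noteq> 0} \<union> {q. w q \<noteq> 0}"]) auto

lemma fin_uminus: "finite {q. z q \<noteq> (0::int)} \<Longrightarrow> finite {q. (- z) q \<noteq> 0}"
  by (simp add: fun_Compl_def)

lemma Phi_diff: assumes "finite {q. z q \<noteq> 0}" "finite {q. w q \<noteq> 0}"
  shows "Phi \<phi> (z - w) = Phi \<phi> z - Phi \<phi> w"
proof -
  have "Phi \<phi> (z - w) = Phi \<phi> (z + (- w))" by (simp only: diff_conv_add_uminus)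
  also have "\<dots> = Phi \<phi> z + Phi \<phi> (- w)" using Phi_add[OF assms(1) fin_uminus[OF assms(2)]] .
  also have "\<dots> = Phi \<phi> z - Phi \<phi> w" by (simp only: Phi_uminus diff_conv_add_uminus)
  finally show ?thesis .
qed

lemma fin_tdelta: "finite {q. tdelta p q \<noteq> 0}"
  by (rule finite_subset[of _ "{p}"]) (auto simp: tdelta_def)

lemma Phi_tdelta: "Phi \<phi> (tdelta p) = \<phi> p"
  by (subst Phi_superset[of "{p}"]) (auto simp: tdelta_def)

lemma fin_diff: "finite {q. z q \<noteq> (0::int)} \<Longrightarrow> finite {q. w q \<noteq> 0} \<Longrightarrow> finite {q. (z - w) q \<noteq> 0}"
  by (rule finite_subset[of _ "{q. z q \<noteq> 0} \<union> {q. w q \<noteq> 0}"]) auto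

lemma fin3: "finite {q. tdelta a q - tdelta b q - tdelta c q \<noteq> (0::int)}"
  by (rule finite_subset[of _ "{a, b, c}"]) (auto simp: tdelta_def)

lemma fin2: "finite {q. tdelta a q - tdelta b q \<noteq> (0::int)}"
  by (rule finite_subset[of _ "{a, b}"]) (auto simp: tdelta_def)

lemma fin_gens: "w \<in> tensor_gens S ad mu R \<Longrightarrow> finite {q. w q \<noteq> 0}"
  unfolding tensor_gens_def by (elim UnE CollectE exE conjE) (simp_all only: fin3 fin2)

lemma Phi_gens:
  assumes al: "\<And>u u' v. u \<in> S \<Longrightarrow> u' \<in> S \<Longrightarrow> v \<in> S \<Longrightarrow> \<phi> (ad u u', v) = \<phi> (u, v) + \<phi> (u', v)"
    and ar: "\<And>u v v'. u \<in> S \<Longrightarrow> v \<in> S \<Longrightarrow> v' \<in> S \<Longrightarrow> \<phi> (u, ad v v') = \<phi> (u, v) + \<phi> (u, v')"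
    and bl: "\<And>u r v. u \<in> S \<Longrightarrow> r \<in> R \<Longrightarrow> v \<in> S \<Longrightarrow> \<phi> (mu u r, v) = \<phi> (u, mu r v)"
    and w: "w \<in> tensor_gens S ad mu R"
  shows "Phi \<phi> w = 0"
proof -
  have D: "Phi \<phi> (tdelta a - tdelta b - tdelta c) = \<phi> a - \<phi> b - \<phi> c" for a b c
    by (simp only: Phi_diff[OF fin_diff[OF fin_tdelta fin_tdelta] fin_tdelta] Phi_diff[OF fin_tdelta fin_tdelta] Phi_tdelta)
  have D2: "Phi \<phi> (tdelta a - tdelta b) = \<phi> a - \<phi> b" for a b
    by (simp only: Phi_diff[OF fin_tdelta fin_tdelta] Phi_tdelta)
  from w show ?thesis unfolding tensor_gens_def
  proof (elim UnE CollectE exE conjE)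
    fix u u' v assume "w = (\<lambda>q. tdelta (ad u u', v) q - tdelta (u, v) q - tdelta (u', v) q)" "u \<in> S" "u' \<in> S" "v \<in> S"
    then show ?thesis using D[of "(ad u u', v)" "(u, v)" "(u', v)"] al by (simp add: fun_diff_def)
  next
    fix u v v' assume "w = (\<lambda>q. tdelta (u, ad v v') q - tdelta (u, v) q - tdelta (u, v') q)" "u \<in> S" "v \<in> S" "v' \<in> S"
    then show ?thesis using D[of "(u, ad v v')" "(u, v)" "(u, v')"] ar by (simp add: fun_diff_def)
  next
    fix u r v assume "w = (\<lambda>q. tdelta (mu u r, v) q - tdelta (u, mu r v) q)" "u \<in> S" "r \<in> R" "v \<in> S"
    then show ?thesis using D2[of "(mu u r, v)" "(u, mu r v)"] bl by (simp add: fun_diff_def)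
  qed
qed

lemma Phi_null:
  assumes al: "\<And>u u' v. u \<in> S \<Longrightarrow> u' \<in> S \<Longrightarrow> v \<in> S \<Longrightarrow> \<phi> (ad u u', v) = \<phi> (u, v) + \<phi> (u', v)"
    and ar: "\<And>u v v'. u \<in> S \<Longrightarrow> v \<in> S \<Longrightarrow> v' \<in> S \<Longrightarrow> \<phi> (u, ad v v') = \<phi> (u, v) + \<phi> (u, v')"
    and bl: "\<And>u r v. u \<in> S \<Longrightarrow> r \<in> R \<Longrightarrow> v \<in> S \<Longrightarrow> \<phi> (mu u r, v) = \<phi> (u, mu r v)"
    and z: "z \<in> tensor_null S ad mu R"
  shows "finite {q. z q \<noteq> 0} \<and> Phi \<phi> z = 0"
  using z
proof (induction z rule: tensor_null.induct)
  case zero then show ?case by (simp add: Phi_def)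
next
  case (plus z w)
  have fw: "finite {q. w q \<noteq> 0}" using fin_gens[OF plus.hyps(2)] .
  have e: "Phi \<phi> (z + w) = Phi \<phi> z + Phi \<phi> w" by (rule Phi_add[OF conjunct1[OF plus.IH] fw])
  have "Phi \<phi> (z + w) = 0" unfolding e using conjunct2[OF plus.IH] Phi_gens[OF al ar bl plus.hyps(2)] by simp
  moreover have "finite {q. (z + w) q \<noteq> 0}" using fin_add[OF conjunct1[OF plus.IH] fw] .
  ultimately show ?case by (simp add: plus_fun_def)
next
  case (minus z w)
  have fw: "finite {q. w q \<noteq> 0}" using fin_gens[OF minus.hyps(2)] .
  have e: "Phi \<phi> (z - w) = Phi \<phi> z - Phi \<phi> w" by (rule Phi_diff[OF conjunct1[OF minus.IH] fw])
  have "Phi \<phi> (z - w) = 0" unfolding e using conjunct2[OF minus.IH] Phi_gens[OF al ar bl minus.hyps(2)] by simp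
  moreover have "finite {q. (z - w) q \<noteq> 0}" using fin_diff[OF conjunct1[OF minus.IH] fw] .
  ultimately show ?case by (simp add: fun_diff_def)
qed

lemma fin_sum_list: "finite {q. sum_list (map (\<lambda>p. tdelta (f p)) xs) q \<noteq> (0::int)}"
proof (induction xs)
  case Nil then show ?case by simp
next
  case (Cons a xs) then show ?case using fin_add[OF fin_tdelta] by simp
qed

lemma Phi_sum_list: "Phi \<phi> (sum_list (map (\<lambda>p. tdelta (f p)) xs)) = (\<Sum>p\<leftarrow>xs. \<phi> (f p))"
proof (induction xs)
  case Nil then show ?case by (simp add: Phi_def)
next
  case (Cons a xs)
  have "Phi \<phi> (sum_list (map (\<lambda>p. tdelta (f p)) (a # xs))) = Phi \<phi> (tdelta (f a) + sum_list (map (\<lambda>p. tdelta (f p)) xs))"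
    by (simp only: list.map sum_list.Cons)
  also have "\<dots> = \<phi> (f a) + Phi \<phi> (sum_list (map (\<lambda>p. tdelta (f p)) xs))"
    by (simp only: Phi_add[OF fin_tdelta fin_sum_list] Phi_tdelta)
  also have "\<dots> = \<phi> (f a) + (\<Sum>p\<leftarrow>xs. \<phi> (f p))" using Cons.IH by (simp only:)
  finally show ?case by (simp only: list.map sum_list.Cons)
qed

lemma sl_idx: "sum_list (map f xs) = (\<Sum>i<length xs. f (xs ! i))"
  by (simp add: sum_list_sum_nth atLeast0LessThan)

lemma center_sum: "(\<And>i. i \<in> I \<Longrightarrow> f i \<in> center) \<Longrightarrow> sum f I \<in> center"
proof (induction I rule: infinite_finite_induct)
  case (insert i I)
  then show ?case unfolding center_def by (simp add: distrib_left distrib_right)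
qed (auto simp: center_def)

lemma foldr_sum: "foldr (\<lambda>p acc. skew_add (mu (fst p) (snd p)) acc) xs (\<lambda>_. 0) = sum_list (map (\<lambda>p. mu (fst p) (snd p)) xs)"
  by (induction xs) (simp_all add: skew_add_eq zero_fun_def)

context act
begin

definition pi where "pi g u = \<alpha> (iv g) (u g)"

lemma pi_A: "u \<in> S \<Longrightarrow> g \<in> M \<Longrightarrow> pi g u \<in> A (s g)"
  unfolding pi_def using al_inv_maps S_val by blast

lemma trace_eq: assumes fM: "finite M" and e: "e \<in> Ob"
  shows "trace_j G \<iota> \<alpha> e a = (\<Sum>g\<in>{g\<in>M. t g = e}. \<alpha> g (a * \<iota> (s g)))"
proof -
  have U: "{g\<in>M. t g = e} = (\<Union>ei\<in>Ob. hom G ei e)"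
    unfolding hom_def by (auto simp: s_obj)
  have "trace_j G \<iota> \<alpha> e a = (\<Sum>ei\<in>Ob. \<Sum>g\<in>hom G ei e. \<alpha> g (a * \<iota> (s g)))"
    unfolding trace_j_def trace_ij_def by simp
  also have "\<dots> = (\<Sum>g\<in>(\<Union>ei\<in>Ob. hom G ei e). \<alpha> g (a * \<iota> (s g)))"
    by (rule sum.UNION_disjoint[symmetric]) (auto simp: finO hom_def intro: finite_subset[OF _ fM])
  finally show ?thesis using U by simp
qed

lemma dir1:
  assumes conn: "connected_groupoid G" and nz: "\<forall>e\<in>Ob. A e \<noteq> {0}"
    and sep: "separable_ext S skew_add mul (\<lambda>_. 0) (skew_one G \<iota>) (range emb)"
  shows "finite M \<and> (\<exists>a\<in>center. \<exists>k\<in>Ob. trace_j G \<iota> \<alpha> k a = \<iota> k)"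
proof -
  obtain xs where xsS: "set xs \<subseteq> S \<times> S"
    and m1: "foldr (\<lambda>p acc. skew_add (mul (fst p) (snd p)) acc) xs (\<lambda>_. 0) = skew_one G \<iota>"
    and comm: "\<And>s0. s0 \<in> S \<Longrightarrow> (\<lambda>q. formal_sum (map (\<lambda>p. (mul s0 (fst p), snd p)) xs) q
                  - formal_sum (map (\<lambda>p. (fst p, mul (snd p) s0)) xs) q) \<in> tensor_null S skew_add mul (range emb)"
    using sep unfolding separable_ext_def by blast
  define n where "n = length xs"
  define X where "X i = fst (xs ! i)" for i
  define Y where "Y i = snd (xs ! i)" for i
  have XS: "X i \<in> S" and YS: "Y i \<in> S" if "i < n" for i
  proof -
    have "xs ! i \<in> set xs" using that unfolding n_def by simp
    then have "xs ! i \<in> S \<times> S" using xsS by blast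
    then show "X i \<in> S" "Y i \<in> S" unfolding X_def Y_def by (auto simp: mem_Times_iff)
  qed
  define W where "W g k = (\<Sum>i<n. pi g (X i) * Y i k)" for g k
  define c where "c f = W f f" for f

  have K: "(\<Sum>i<n. pi g (mul s0 (X i)) * Y i k) = (\<Sum>i<n. pi g (X i) * mul (Y i) s0 k)"
    if g: "g \<in> M" and s0: "s0 \<in> S" for g k s0
  proof -
    define \<phi> where "\<phi> = (\<lambda>(u::'g \<Rightarrow> 'a, v::'g \<Rightarrow> 'a). pi g u * v k)"
    have al: "\<phi> (skew_add u u', v) = \<phi> (u, v) + \<phi> (u', v)" if "u \<in> S" "u' \<in> S" "v \<in> S" for u u' v
    proof -
      have "pi g (skew_add u u') = pi g u + pi g u'"
        unfolding pi_def skew_add_def using al_add[of "iv g" "u g" "u' g"] S_val that g by simp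
      then show ?thesis unfolding \<phi>_def by (simp add: distrib_right)
    qed
    have ar: "\<phi> (u, skew_add v v') = \<phi> (u, v) + \<phi> (u, v')" for u v v'
      unfolding \<phi>_def skew_add_def by (simp add: distrib_left)
    have bl: "\<phi> (mul u r, v) = \<phi> (u, mul r v)" if u: "u \<in> S" and r: "r \<in> range emb" and v: "v \<in> S" for u r v
    proof -
      obtain b where rb: "r = emb b" using r by blast
      have sg: "s g \<in> Ob" using s_obj[OF g] .
      have bi: "b * \<iota> (s g) \<in> A (s g)" using A_times_iota[OF sg] .
      have "pi g (mul u r) = \<alpha> (iv g) (u g * \<alpha> g (b * \<iota> (s g)))"
        unfolding pi_def rb mul_emb[OF u] by simp
      also have "\<dots> = pi g u * (b * \<iota> (s g))"
        unfolding pi_def using al_mult[of "iv g" "u g" "\<alpha> g (b * \<iota> (s g))"] g S_val[OF u g]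
          al_maps[OF g bi] al_inv[OF g bi] by simp
      finally have 1: "pi g (mul u r) = pi g u * (b * \<iota> (s g))" .
      have "pi g u * (b * \<iota> (s g)) = pi g u * \<iota> (s g) * b"
        using cent[OF sg] by (simp add: mult.assoc)
      also have "\<dots> = pi g u * b" using memA[OF sg] pi_A[OF u g] by simp
      finally have 2: "pi g u * (b * \<iota> (s g)) = pi g u * b" .
      have 3: "mul r v k = b * v k" unfolding rb emb_mul[OF v] by simp
      show ?thesis unfolding \<phi>_def using 1 2 3 by (simp add: mult.assoc)
    qed
    let ?fa = "formal_sum (map (\<lambda>p. (mul s0 (fst p), snd p)) xs)"
    let ?fb = "formal_sum (map (\<lambda>p. (fst p, mul (snd p) s0)) xs)"
    have "(\<lambda>q. ?fa q - ?fb q) = ?fa - ?fb" by (simp add: fun_diff_def)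
    with comm[OF s0] have N: "?fa - ?fb \<in> tensor_null S skew_add mul (range emb)" by simp
    have "Phi \<phi> (?fa - ?fb) = 0" using Phi_null[OF al ar bl N] by blast
    then have "Phi \<phi> ?fa = Phi \<phi> ?fb"
      unfolding formal_sum_eq by (simp add: Phi_diff[OF fin_sum_list fin_sum_list])
    then have "(\<Sum>p\<leftarrow>xs. \<phi> (mul s0 (fst p), snd p)) = (\<Sum>p\<leftarrow>xs. \<phi> (fst p, mul (snd p) s0))"
      unfolding formal_sum_eq Phi_sum_list .
    then show ?thesis unfolding sl_idx \<phi>_def n_def X_def Y_def by simp
  qed

  have cA: "c f \<in> A f" if f: "f \<in> Ob" for f
    unfolding c_def W_def
  proof (rule A_sum[OF f], rule A_mult_r[OF f])
    fix i assume "i \<in> {..<n}"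
    then have "pi f (X i) \<in> A (s f)" using pi_A[OF XS obj_M[OF f]] by simp
    then show "pi f (X i) \<in> A f" using obj_s[OF f] by simp
  qed
  have cC: "c f \<in> center" if f: "f \<in> Ob" for f
    unfolding center_def
  proof (clarify)
    fix b
    have fM: "f \<in> M" using obj_M[OF f] .
    have p1: "pi f (mul (emb b) (X i)) = b * pi f (X i)" if "i < n" for i
    proof -
      have xf: "X i f \<in> A f" using S_val[OF XS[OF that] fM] obj_t[OF f] by simp
      show ?thesis unfolding pi_def emb_mul[OF XS[OF that]] using iv_obj[OF f] al_obj[OF f] xf A_mult_l[OF f xf]
        by simp
    qed
    have p2: "mul (Y i) (emb b) f = Y i f * (b * \<iota> f)" if "i < n" for i
      unfolding mul_emb[OF YS[OF that]] using al_obj[OF f A_times_iota[OF f]] obj_s[OF f] by simp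
    have "b * c f = (\<Sum>i<n. pi f (mul (emb b) (X i)) * Y i f)"
      unfolding c_def W_def by (simp add: p1 sum_distrib_left mult.assoc)
    also have "\<dots> = (\<Sum>i<n. pi f (X i) * mul (Y i) (emb b) f)" using K[OF fM emb_S] .
    also have "\<dots> = c f * (b * \<iota> f)" unfolding c_def W_def by (simp add: p2 sum_distrib_right mult.assoc)
    also have "\<dots> = c f * \<iota> f * b" using cent[OF f] by (simp add: mult.assoc)
    also have "\<dots> = c f * b" using memA[OF f] cA[OF f] by simp
    finally show "c f * b = b * c f" by simp
  qed

  have T: "W (iv h) k = (if k \<in> M \<and> s k = s h then W (t h) (cp k (iv h)) else 0)" if h: "h \<in> M" for h k
  proof -
    have e: "t h \<in> Ob" "t h \<in> M" using t_obj[OF h] obj_M[OF t_obj[OF h]] by auto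
    have l: "pi (t h) (mul (uh h) (X i)) = pi (iv h) (X i)" if "i < n" for i
    proof -
      have c1: "cp (iv h) (t h) = iv h" using unit_r[of "iv h"] h by simp
      have v: "\<alpha> h (X i (iv h)) \<in> A (t h)" using al_maps[OF h] S_val[OF XS[OF that] iv(1)[OF h]] h by simp
      show ?thesis unfolding pi_def uh_mul[OF h XS[OF that]] using e c1 v h iv_obj[OF e(1)] al_obj[OF e(1) v] by simp
    qed
    have r: "mul (Y i) (uh h) k = (if k \<in> M \<and> s k = s h then Y i (cp k (iv h)) else 0)" if "i < n" for i
      using mul_uh[OF YS[OF that] h] .
    have "W (iv h) k = (\<Sum>i<n. pi (t h) (mul (uh h) (X i)) * Y i k)" unfolding W_def using l by simp
    also have "\<dots> = (\<Sum>i<n. pi (t h) (X i) * mul (Y i) (uh h) k)" using K[OF e(2) uh_S[OF h]] .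
    also have "\<dots> = (\<Sum>i<n. pi (t h) (X i) * (if k \<in> M \<and> s k = s h then Y i (cp k (iv h)) else 0))"
      by (rule sum.cong) (simp_all add: r)
    also have "\<dots> = (if k \<in> M \<and> s k = s h then W (t h) (cp k (iv h)) else 0)"
    proof (cases "k \<in> M \<and> s k = s h")
      case True then show ?thesis unfolding W_def by simp
    next
      case False then show ?thesis by (simp only: if_not_P[OF False] if_False mult_zero_right sum.neutral_const)
    qed
    finally show ?thesis .
  qed
  have T1: "W (iv h) h = c (t h)" if h: "h \<in> M" for h
    using T[OF h, of h] h unfolding c_def by simp
  have T2: "W g (iv g) = c (s g)" if g: "g \<in> M" for g
    using T1[of "iv g"] g by simp

  have ivt: "cp (iv g) (t g) = iv g" if "g \<in> M" for g
    using unit_r[of "iv g"] that by simp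
  have U: "\<iota> e = (\<Sum>g\<in>{g\<in>F. g \<in> M \<and> t g = e}. \<alpha> g (c (s g)))"
    if e: "e \<in> Ob" and F: "finite F" "\<And>i. i < n \<Longrightarrow> {g. X i g \<noteq> 0} \<subseteq> F" for e F
  proof -
    have eM: "e \<in> M" "t e = e" using obj_M[OF e] obj_t[OF e] by auto
    have "\<iota> e = skew_one G \<iota> e" using e by (simp add: skew_one_def)
    also have "\<dots> = (\<Sum>i<n. mul (X i) (Y i) e)"
      unfolding m1[symmetric] foldr_sum sl_idx sum_fun_app n_def X_def Y_def by simp
    also have "\<dots> = (\<Sum>i<n. \<Sum>g\<in>{g\<in>F. g \<in> M \<and> t g = e}. \<alpha> g (pi g (X i) * Y i (iv g)))"
    proof (rule sum.cong[OF refl])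
      fix i assume "i \<in> {..<n}"
      then have i: "i < n" by simp
      show "mul (X i) (Y i) e = (\<Sum>g\<in>{g\<in>F. g \<in> M \<and> t g = e}. \<alpha> g (pi g (X i) * Y i (iv g)))"
        unfolding mul_at[OF XS[OF i] YS[OF i] eM(1) F(1) F(2)[OF i]] eM(2) pi_def
        by (rule sum.cong[OF refl]) (auto simp: ivt)
    qed
    also have "\<dots> = (\<Sum>g\<in>{g\<in>F. g \<in> M \<and> t g = e}. \<Sum>i<n. \<alpha> g (pi g (X i) * Y i (iv g)))"
      by (rule sum.swap)
    also have "\<dots> = (\<Sum>g\<in>{g\<in>F. g \<in> M \<and> t g = e}. \<alpha> g (W g (iv g)))"
    proof (rule sum.cong[OF refl])
      fix g assume "g \<in> {g\<in>F. g \<in> M \<and> t g = e}"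
      then have g: "g \<in> M" by simp
      show "(\<Sum>i<n. \<alpha> g (pi g (X i) * Y i (iv g))) = \<alpha> g (W g (iv g))"
        unfolding W_def using al_sum[OF g, of "{..<n}" "\<lambda>i. pi g (X i) * Y i (iv g)"]
          A_mult_r[OF s_obj[OF g] pi_A[OF XS g]] by simp
    qed
    also have "\<dots> = (\<Sum>g\<in>{g\<in>F. g \<in> M \<and> t g = e}. \<alpha> g (c (s g)))"
      using T2 by simp
    finally show ?thesis .
  qed

  define F0 where "F0 = (\<Union>i<n. {g. X i g \<noteq> 0})"
  have F0: "finite F0" "\<And>i. i < n \<Longrightarrow> {g. X i g \<noteq> 0} \<subseteq> F0"
    unfolding F0_def using S_fin[OF XS] by auto
  obtain e where e: "e \<in> Ob" using nontriv by blast
  have ie: "\<iota> e \<noteq> 0"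
  proof
    assume "\<iota> e = 0"
    then have "A e = {0}" unfolding ideal_at_def by auto
    with nz e show False by blast
  qed
  obtain g0 where g0: "g0 \<in> M" "\<alpha> g0 (c (s g0)) \<noteq> 0"
    using U[OF e F0] ie by (metis (mono_tags, lifting) mem_Collect_eq sum.neutral)
  define f where "f = s g0"
  have f: "f \<in> Ob" "c f \<noteq> 0" using g0 s_obj al_zero unfolding f_def by metis+
  have Tf: "{h \<in> M. t h = f} \<subseteq> iv ` F0"
  proof
    fix h assume "h \<in> {h \<in> M. t h = f}"
    then have h: "h \<in> M" "t h = f" by auto
    have "W (iv h) h \<noteq> 0" using T1[OF h(1)] h(2) f by simp
    then obtain i where i: "i < n" "pi (iv h) (X i) \<noteq> 0" unfolding W_def
      by (metis (no_types, lifting) mult_zero_left sum.neutral lessThan_iff)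
    have "X i (iv h) \<noteq> 0" using i(2) h unfolding pi_def by (auto simp: al_zero)
    then have "iv h \<in> F0" using F0(2)[OF i(1)] by auto
    then show "h \<in> iv ` F0" using h by (metis image_eqI iv_iv)
  qed
  have finT: "finite {h \<in> M. t h = f}" using finite_subset[OF Tf] F0 by blast
  have fM: "finite M"
  proof -
    let ?T = "{h \<in> M. t h = f}"
    have "M \<subseteq> (\<lambda>(a, b). cp (iv a) b) ` (?T \<times> ?T)"
    proof
      fix g assume g: "g \<in> M"
      have "hom G (t g) f \<noteq> {}" using conn t_obj[OF g] f(1) unfolding connected_groupoid_def by blast
      then obtain k1 where k1: "k1 \<in> M" "s k1 = t g" "t k1 = f" unfolding hom_def by blast
      have "g = cp (iv k1) (cp k1 g)" using cancel_l[OF k1(1) g k1(2)] by simp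
      moreover have "cp k1 g \<in> ?T" using k1 g by simp
      ultimately show "g \<in> (\<lambda>(a, b). cp (iv a) b) ` (?T \<times> ?T)" using k1 by force
    qed
    moreover have "finite ((\<lambda>(a, b). cp (iv a) b) ` (?T \<times> ?T))" using finT by simp
    ultimately show ?thesis by (rule finite_subset)
  qed

  define a where "a = (\<Sum>f\<in>Ob. c f)"
  have aC: "a \<in> center" unfolding a_def by (rule center_sum) (use cC in auto)
  have ai: "a * \<iota> f' = c f'" if f': "f' \<in> Ob" for f'
  proof -
    have "a * \<iota> f' = (\<Sum>f\<in>Ob. c f * \<iota> f')" unfolding a_def by (simp add: sum_distrib_right)
    also have "\<dots> = (\<Sum>f\<in>Ob. if f = f' then c f' else 0)"
    proof (rule sum.cong[OF refl])
      fix f assume f: "f \<in> Ob"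
      show "c f * \<iota> f' = (if f = f' then c f' else 0)"
        using memA[OF f'] cA[OF f'] A_iota_other[OF f f' _ cA[OF f]] by auto
    qed
    also have "\<dots> = c f'" using f' finO by simp
    finally show ?thesis .
  qed
  have "trace_j G \<iota> \<alpha> e a = (\<Sum>g\<in>{g\<in>M. t g = e}. \<alpha> g (c (s g)))"
    unfolding trace_eq[OF fM e] using ai s_obj by simp
  also have "\<dots> = \<iota> e" using U[OF e fM] S_out XS by (fastforce intro: sum.cong)
  finally show ?thesis using fM aC e by blast
qed

end

context act
begin

abbreviation "NN \<equiv> tensor_null S skew_add mul (range emb)"

lemma iv_cp_ivh: assumes h: "h \<in> M" and g: "g \<in> M" and tg: "t g = t h"
  shows "iv (cp (iv h) g) = cp (iv g) h"
proof -
  have m: "cp (iv h) g \<in> M" "cp (iv g) h \<in> M" using h g tg by simp_all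
  have "cp (cp (iv h) g) (cp (iv g) h) = cp (iv h) (cp g (cp (iv g) h))"
    using assoc[of "iv h" g "cp (iv g) h"] h g tg by simp
  also have "\<dots> = cp (iv h) h" using cancel_l2[OF g h tg] by simp
  also have "\<dots> = t (cp (iv h) g)" using h g tg by simp
  finally show ?thesis using iv_unique[of "cp (iv h) g" "cp (iv g) h"] m h g tg by simp
qed

lemma mul_zero_l: "mul 0 y = 0"
  unfolding skew_mult_def by (simp add: zero_fun_def)

lemma mul_zero_r: "mul x 0 = 0"
  unfolding skew_mult_def by (simp add: zero_fun_def)

lemma tz1: assumes v: "v \<in> S" shows "tdelta (0, v) \<in> NN"
proof -
  have "tdelta (skew_add 0 0, v) - tdelta (0, v) - tdelta (0, v) \<in> NN" by (rule gen_l[OF S_zero S_zero v])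
  then have "- tdelta (0, v) \<in> NN" by (simp add: skew_add_eq)
  from tnull_uminus[OF this] show ?thesis by simp
qed

lemma tz2: assumes u: "u \<in> S" shows "tdelta (u, 0) \<in> NN"
proof -
  have "tdelta (u, skew_add 0 0) - tdelta (u, 0) - tdelta (u, 0) \<in> NN" by (rule gen_r[OF u S_zero S_zero])
  then have "- tdelta (u, 0) \<in> NN" by (simp add: skew_add_eq)
  from tnull_uminus[OF this] show ?thesis by simp
qed

lemma tr_all:
  assumes conn: "connected_groupoid G" and fM: "finite M" and k0: "k0 \<in> Ob"
    and tk: "(\<Sum>g\<in>{g\<in>M. t g = k0}. \<alpha> g (a * \<iota> (s g))) = \<iota> k0" and e: "e \<in> Ob"
  shows "(\<Sum>g\<in>{g\<in>M. t g = e}. \<alpha> g (a * \<iota> (s g))) = \<iota> e"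
proof -
  have "hom G k0 e \<noteq> {}" using conn k0 e unfolding connected_groupoid_def by blast
  then obtain h where h: "h \<in> M" "s h = k0" "t h = e" unfolding hom_def by blast
  have "\<iota> e = \<alpha> h (\<iota> k0)" using al_unit[OF h(1)] h by simp
  also have "\<dots> = (\<Sum>g\<in>{g\<in>M. t g = k0}. \<alpha> h (\<alpha> g (a * \<iota> (s g))))"
    unfolding tk[symmetric]
  proof (rule al_sum[OF h(1)])
    fix g assume "g \<in> {g\<in>M. t g = k0}"
    then have g: "g \<in> M" "t g = s h" using h by auto
    show "\<alpha> g (a * \<iota> (s g)) \<in> A (s h)" using al_maps[OF g(1) A_times_iota[OF s_obj[OF g(1)]]] g(2) by simp
  qed
  also have "\<dots> = (\<Sum>g\<in>{g\<in>M. t g = k0}. \<alpha> (cp h g) (a * \<iota> (s (cp h g))))"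
    using h by (intro sum.cong refl) (auto simp: al_comp A_times_iota s_obj)
  also have "\<dots> = (\<Sum>g\<in>{g\<in>M. t g = e}. \<alpha> g (a * \<iota> (s g)))"
    by (rule sum.reindex_bij_witness[of _ "cp (iv h)" "cp h"])
       (use h in \<open>auto simp: cancel_l cancel_l2\<close>)
  finally show ?thesis by simp
qed

end

locale sd = act G \<iota> \<alpha> for G :: "('g, 'x) groupoid_scheme" and \<iota> :: "'g \<Rightarrow> 'a::ring_1" and \<alpha> +
  fixes a :: 'a and gl :: "'g list"
  assumes aC: "a \<in> center" and fM: "finite (mor G)"
    and tr: "\<And>e. e \<in> objs G \<Longrightarrow> (\<Sum>g\<in>{g\<in>mor G. tgt G g = e}. \<alpha> g (a * \<iota> (src G g))) = \<iota> e"
    and gl: "set gl = mor G" "distinct gl"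
begin

definition cg where "cg g = \<alpha> g (a * \<iota> (s g))"
definition P where "P g = (mono g (cg g), mono (iv g) (\<iota> (s g)))"
definition xs where "xs = map P gl"

lemma cg_A: "g \<in> M \<Longrightarrow> cg g \<in> A (t g)"
  unfolding cg_def using al_maps A_times_iota s_obj by blast

lemma cg_C: "g \<in> M \<Longrightarrow> cg g \<in> center"
  unfolding cg_def using al_central aC by blast

lemma cg_comm: "g \<in> M \<Longrightarrow> cg g * b = b * cg g"
  using cg_C unfolding center_def by blast

lemma P_S: "g \<in> M \<Longrightarrow> fst (P g) \<in> S \<and> snd (P g) \<in> S"
  unfolding P_def using mono_S cg_A A_iota s_obj by simp

lemma xs_S: "set xs \<subseteq> S \<times> S"
proof
  fix p assume "p \<in> set xs"
  then obtain g where "g \<in> M" "p = P g" unfolding xs_def using gl by auto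
  then show "p \<in> S \<times> S" using P_S[of g] by (simp add: mem_Times_iff)
qed

lemma sl_set: "sum_list (map F xs) = (\<Sum>g\<in>M. F (P g))"
  unfolding xs_def using gl by (simp add: sum_list_distinct_conv_sum_set o_def)

lemma m1: "foldr (\<lambda>p acc. skew_add (mul (fst p) (snd p)) acc) xs (\<lambda>_. 0) = skew_one G \<iota>"
proof -
  have pr: "mul (fst (P g)) (snd (P g)) = mono (t g) (cg g)" if g: "g \<in> M" for g
  proof -
    have v: "\<alpha> (iv g) (cg g) \<in> A (s g)" using al_inv_maps[OF g cg_A[OF g]] .
    have "\<alpha> g (\<alpha> (iv g) (cg g) * \<iota> (s g)) = cg g"
      using memA[OF s_obj[OF g]] v al_inv2[OF g cg_A[OF g]] by simp
    then show ?thesis unfolding P_def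
      using mono_mul[OF g cg_A[OF g] iv(1)[OF g]] A_iota[OF s_obj[OF g]] g by simp
  qed
  have "foldr (\<lambda>p acc. skew_add (mul (fst p) (snd p)) acc) xs (\<lambda>_. 0) = (\<Sum>g\<in>M. mono (t g) (cg g))"
    unfolding foldr_sum sl_set using pr by simp
  also have "\<dots> = skew_one G \<iota>"
  proof (rule ext)
    fix k
    have "(\<Sum>g\<in>M. mono (t g) (cg g)) k = (\<Sum>g\<in>M. if t g = k then cg g else 0)"
      unfolding sum_fun_app mono_def by (rule sum.cong) auto
    also have "\<dots> = (\<Sum>g\<in>{g\<in>M. t g = k}. cg g)"
      using fM by (simp add: sum.inter_filter)
    also have "\<dots> = skew_one G \<iota> k"
    proof (cases "k \<in> Ob")
      case True then show ?thesis using tr[OF True] by (simp add: skew_one_def cg_def)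
    next
      case False
      then have e: "{g\<in>M. t g = k} = {}" using t_obj by blast
      show ?thesis unfolding e using False by (simp add: skew_one_def)
    qed
    finally show "(\<Sum>g\<in>M. mono (t g) (cg g)) k = skew_one G \<iota> k" .
  qed
  finally show ?thesis .
qed

definition LL where "LL s0 = sum_list (map (\<lambda>p. tdelta (mul s0 (fst p), snd p)) xs)"
definition RR where "RR s0 = sum_list (map (\<lambda>p. tdelta (fst p, mul (snd p) s0)) xs)"
definition D where "D s0 = LL s0 - RR s0"

lemma addL: assumes s1: "s1 \<in> S" and s2: "s2 \<in> S" shows "LL (s1 + s2) - LL s1 - LL s2 \<in> NN"
proof -
  have "LL (s1 + s2) - LL s1 - LL s2 = sum_list (map (\<lambda>p. tdelta (mul (s1 + s2) (fst p), snd p)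
     - tdelta (mul s1 (fst p), snd p) - tdelta (mul s2 (fst p), snd p)) xs)"
    unfolding LL_def by (simp add: sum_list_subtractf)
  also have "\<dots> \<in> NN"
  proof (rule tnull_sum_list)
    fix p assume "p \<in> set xs"
    then have p: "fst p \<in> S" "snd p \<in> S" using xs_S by auto
    have "mul (s1 + s2) (fst p) = skew_add (mul s1 (fst p)) (mul s2 (fst p))"
      using mul_add_l[OF s1 s2 p(1)] by (simp add: skew_add_eq)
    then show "tdelta (mul (s1 + s2) (fst p), snd p) - tdelta (mul s1 (fst p), snd p) - tdelta (mul s2 (fst p), snd p) \<in> NN"
      using gen_l[OF mul_S[OF s1 p(1)] mul_S[OF s2 p(1)] p(2)] by simp
  qed
  finally show ?thesis .
qed

lemma addR: assumes s1: "s1 \<in> S" and s2: "s2 \<in> S" shows "RR (s1 + s2) - RR s1 - RR s2 \<in> NN"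
proof -
  have "RR (s1 + s2) - RR s1 - RR s2 = sum_list (map (\<lambda>p. tdelta (fst p, mul (snd p) (s1 + s2))
     - tdelta (fst p, mul (snd p) s1) - tdelta (fst p, mul (snd p) s2)) xs)"
    unfolding RR_def by (simp add: sum_list_subtractf)
  also have "\<dots> \<in> NN"
  proof (rule tnull_sum_list)
    fix p assume "p \<in> set xs"
    then have p: "fst p \<in> S" "snd p \<in> S" using xs_S by auto
    have "mul (snd p) (s1 + s2) = skew_add (mul (snd p) s1) (mul (snd p) s2)"
      using mul_add_r[OF p(2) s1 s2] by (simp add: skew_add_eq)
    then show "tdelta (fst p, mul (snd p) (s1 + s2)) - tdelta (fst p, mul (snd p) s1) - tdelta (fst p, mul (snd p) s2) \<in> NN"
      using gen_r[OF p(1) mul_S[OF p(2) s1] mul_S[OF p(2) s2]] by simp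
  qed
  finally show ?thesis .
qed

lemma D_add: assumes "s1 \<in> S" "s2 \<in> S" "D s1 \<in> NN" "D s2 \<in> NN" shows "D (s1 + s2) \<in> NN"
proof -
  have "D (s1 + s2) = ((LL (s1 + s2) - LL s1 - LL s2) - (RR (s1 + s2) - RR s1 - RR s2)) + D s1 + D s2"
    unfolding D_def by (simp add: algebra_simps)
  then show ?thesis using addL[OF assms(1,2)] addR[OF assms(1,2)] assms(3,4)
    by (simp add: tnull_add tnull_diff)
qed

lemma D_zero: "D 0 \<in> NN"
  unfolding D_def LL_def RR_def mul_zero_l mul_zero_r
  by (rule tnull_diff; rule tnull_sum_list) (use xs_S tz1 tz2 in auto)

end

context sd
begin

lemma D_mono: assumes h: "h \<in> M" and b: "b \<in> A (t h)" shows "D (mono h b) \<in> NN"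
proof -
  define Lt where "Lt g = tdelta (mul (mono h b) (mono g (cg g)), mono (iv g) (\<iota> (s g)))" for g
  define Rt where "Rt g = tdelta (mono g (cg g), mul (mono (iv g) (\<iota> (s g))) (mono h b))" for g
  define M1 where "M1 = {g\<in>M. t g = s h}"
  define M2 where "M2 = {g\<in>M. t g = t h}"
  have LL: "LL (mono h b) = (\<Sum>g\<in>M. Lt g)" unfolding LL_def sl_set Lt_def P_def by simp
  have RR: "RR (mono h b) = (\<Sum>g\<in>M. Rt g)" unfolding RR_def sl_set Rt_def P_def by simp
  have sL: "(\<Sum>g\<in>M. Lt g) = (\<Sum>g\<in>M - M1. Lt g) + (\<Sum>g\<in>M1. Lt g)"
    by (rule sum.subset_diff) (auto simp: M1_def fM)
  have sR: "(\<Sum>g\<in>M. Rt g) = (\<Sum>g\<in>M - M2. Rt g) + (\<Sum>g\<in>M2. Rt g)"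
    by (rule sum.subset_diff) (auto simp: M2_def fM)
  have ri: "(\<Sum>g\<in>M1. Lt g) = (\<Sum>g\<in>M2. Lt (cp (iv h) g))"
    by (rule sum.reindex_bij_witness[of _ "cp (iv h)" "cp h"])
       (use h in \<open>auto simp: M1_def M2_def cancel_l cancel_l2\<close>)
  have L0: "Lt g \<in> NN" if "g \<in> M - M1" for g
  proof -
    have g: "g \<in> M" "s h \<noteq> t g" using that unfolding M1_def by auto
    have "mul (mono h b) (mono g (cg g)) = 0" using mono_mul[OF h b g(1) cg_A[OF g(1)]] g(2) by simp
    then show ?thesis unfolding Lt_def using tz1 mono_S[OF iv(1)[OF g(1)]] A_iota[OF s_obj[OF g(1)]] g(1) by simp
  qed
  have R0: "Rt g \<in> NN" if "g \<in> M - M2" for g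
  proof -
    have g: "g \<in> M" "t g \<noteq> t h" using that unfolding M2_def by auto
    have "mul (mono (iv g) (\<iota> (s g))) (mono h b) = 0"
      using mono_mul[OF iv(1)[OF g(1)] _ h b] A_iota[OF s_obj[OF g(1)]] g by simp
    then show ?thesis unfolding Rt_def using tz2 mono_S[OF g(1) cg_A[OF g(1)]] by simp
  qed
  have B: "Lt (cp (iv h) g) - Rt g \<in> NN" if "g \<in> M2" for g
  proof -
    have g: "g \<in> M" "t g = t h" using that unfolding M2_def by auto
    let ?g = "cp (iv h) g"
    have gg: "?g \<in> M" "t ?g = s h" "s ?g = s g" "cp h ?g = g" "iv ?g = cp (iv g) h"
      using h g cancel_l2[OF h g(1) g(2)[symmetric]] iv_cp_ivh[OF h g(1) g(2)] by simp_all
    have v: "cp (iv g) h \<in> M" "t (cp (iv g) h) = s g" using g h by simp_all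
    have bi: "\<alpha> (iv h) b \<in> A (s h)" using al_inv_maps[OF h b] .
    have "\<alpha> h (\<alpha> (iv h) b * cg ?g) = \<alpha> h (\<alpha> (iv h) b) * \<alpha> h (cg ?g)"
      using al_mult[OF h bi] cg_A[OF gg(1)] gg(2) by simp
    also have "\<dots> = b * cg g"
      unfolding cg_def using al_inv2[OF h b] al_comp[OF h gg(1)] gg A_times_iota[OF s_obj[OF gg(1)]] by simp
    finally have c1: "\<alpha> h (\<alpha> (iv h) b * cg ?g) = b * cg g" .
    have Lg: "Lt ?g = tdelta (mono g (b * cg g), mono (cp (iv g) h) (\<iota> (s g)))"
      unfolding Lt_def using mono_mul[OF h b gg(1) cg_A[OF gg(1)]] gg c1 by simp
    have bg: "b \<in> A (t g)" using b g by simp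
    have "\<alpha> (iv g) (\<alpha> (iv (iv g)) (\<iota> (s g)) * b) = \<alpha> (iv g) b"
      using al_unit[OF g(1)] memA_l[OF t_obj[OF g(1)] bg] g by simp
    then have Rg: "Rt g = tdelta (mono g (cg g), mono (cp (iv g) h) (\<alpha> (iv g) b))"
      unfolding Rt_def using mono_mul[OF iv(1)[OF g(1)] _ h b] A_iota[OF s_obj[OF g(1)]] g by simp
    let ?u = "mono g (cg g)" and ?r = "emb (\<alpha> (iv g) b)" and ?v = "mono (cp (iv g) h) (\<iota> (s g))"
    have uS: "?u \<in> S" using mono_S[OF g(1) cg_A[OF g(1)]] .
    have vS: "?v \<in> S" using mono_S[OF v(1)] A_iota[OF s_obj[OF g(1)]] v(2) by simp
    have bgi: "\<alpha> (iv g) b \<in> A (s g)" using al_inv_maps[OF g(1) bg] .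
    have mur: "mul ?u ?r = mono g (b * cg g)"
    proof (rule ext)
      fix k
      have "\<alpha> g (\<alpha> (iv g) b * \<iota> (s g)) = b" using memA[OF s_obj[OF g(1)]] bgi al_inv2[OF g(1) bg] by simp
      then show "mul ?u ?r k = mono g (b * cg g) k"
        unfolding mul_emb[OF uS] by (simp add: mono_def cg_comm[OF g(1)])
    qed
    have mrv: "mul ?r ?v = mono (cp (iv g) h) (\<alpha> (iv g) b)"
      unfolding emb_mul[OF vS] using memA[OF s_obj[OF g(1)]] bgi by (auto simp: mono_def)
    have "tdelta (mul ?u ?r, ?v) - tdelta (?u, mul ?r ?v) \<in> NN" by (rule gen_b[OF uS rangeI vS])
    then show ?thesis using Lg Rg mur mrv by simp
  qed
  have "D (mono h b) = (\<Sum>g\<in>M2. Lt (cp (iv h) g) - Rt g) + (\<Sum>g\<in>M - M1. Lt g) - (\<Sum>g\<in>M - M2. Rt g)"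
    unfolding D_def LL RR sL sR ri by (simp add: sum_subtractf algebra_simps)
  moreover have "(\<Sum>g\<in>M2. Lt (cp (iv h) g) - Rt g) + (\<Sum>g\<in>M - M1. Lt g) - (\<Sum>g\<in>M - M2. Rt g) \<in> NN"
    by (intro tnull_diff tnull_add tnull_sum B L0 R0)
  ultimately show ?thesis by simp
qed

lemma D_all: assumes s0: "s0 \<in> S" shows "D s0 \<in> NN"
proof -
  have "\<forall>s0. s0 \<in> S \<longrightarrow> {g. s0 g \<noteq> 0} \<subseteq> H \<longrightarrow> D s0 \<in> NN" if "finite H" for H
    using that
  proof (induction H rule: finite_induct)
    case empty
    { fix s0 :: "'g \<Rightarrow> 'a" assume "{g. s0 g \<noteq> 0} \<subseteq> {}"
      then have "s0 = 0" by (auto simp: fun_eq_iff)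
      then have "D s0 \<in> NN" using D_zero by simp }
    then show ?case by blast
  next
    case (insert h H)
    show ?case
    proof (intro allI impI)
      fix s0 assume s0: "s0 \<in> S" and sup: "{g. s0 g \<noteq> 0} \<subseteq> insert h H"
      define s1 where "s1 = mono h (s0 h)"
      define s2 where "s2 = s0(h := 0)"
      have e: "s0 = s1 + s2" unfolding s1_def s2_def by (auto simp: fun_eq_iff mono_def)
      have s2S: "s2 \<in> S"
      proof (rule S_I)
        show "finite {g. s2 g \<noteq> 0}" using S_fin[OF s0] by (rule finite_subset[rotated]) (auto simp: s2_def)
      qed (auto simp: s2_def S_out[OF s0] S_val[OF s0] A_zero t_obj)
      have s2H: "{g. s2 g \<noteq> 0} \<subseteq> H" using sup by (auto simp: s2_def)
      have D2: "D s2 \<in> NN" using insert.IH s2S s2H by blast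
      have s1S: "s1 \<in> S \<and> D s1 \<in> NN"
      proof (cases "h \<in> M")
        case True then show ?thesis unfolding s1_def using mono_S D_mono S_val[OF s0] by blast
      next
        case False
        then have "s1 = 0" unfolding s1_def using S_out[OF s0] by (auto simp: mono_def fun_eq_iff)
        then show ?thesis using S_zero D_zero by simp
      qed
      show "D s0 \<in> NN" unfolding e using D_add s1S s2S D2 by blast
    qed
  qed
  then show ?thesis using S_fin[OF s0] s0 by blast
qed

lemma sep: "separable_ext S skew_add mul (\<lambda>_. 0) (skew_one G \<iota>) (range emb)"
  unfolding separable_ext_def
proof (intro exI conjI ballI)
  show "set xs \<subseteq> S \<times> S" by (rule xs_S)
  show "foldr (\<lambda>p acc. skew_add (mul (fst p) (snd p)) acc) xs (\<lambda>_. 0) = skew_one G \<iota>" by (rule m1)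
  fix s0 assume s0: "s0 \<in> S"
  have "(\<lambda>q. formal_sum (map (\<lambda>p. (mul s0 (fst p), snd p)) xs) q - formal_sum (map (\<lambda>p. (fst p, mul (snd p) s0)) xs) q) = D s0"
    unfolding D_def LL_def RR_def formal_sum_eq by (simp add: fun_diff_def)
  then show "(\<lambda>q. formal_sum (map (\<lambda>p. (mul s0 (fst p), snd p)) xs) q - formal_sum (map (\<lambda>p. (fst p, mul (snd p) s0)) xs) q) \<in> NN"
    using D_all[OF s0] by simp
qed

end

theorem corollary4p3:
  fixes G :: "'g groupoid" and \<iota> :: "'g \<Rightarrow> 'a::ring_1" and \<alpha> :: "'g \<Rightarrow> 'a \<Rightarrow> 'a"
  assumes "groupoid G"
    and "connected_groupoid G"
    and "finite (objs G)"
    and "direct_sum_decomp G \<iota>"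
    and "\<forall>e\<in>objs G. ideal_at \<iota> e \<noteq> {0}"
    and "global_action G \<iota> \<alpha>"
  shows "separable_ext (skew_carrier G \<iota>) skew_add (skew_mult G \<alpha>) (\<lambda>_. 0) (skew_one G \<iota>)
            (range (skew_emb G \<iota>))
         \<longleftrightarrow> (finite (mor G) \<and> (\<exists>a\<in>center. \<exists>k\<in>objs G. trace_j G \<iota> \<alpha> k a = \<iota> k))"
proof -
  interpret act G \<iota> \<alpha>
    by (unfold_locales) (use assms in auto)
  show ?thesis
  proof
    assume sep: "separable_ext (skew_carrier G \<iota>) skew_add (skew_mult G \<alpha>) (\<lambda>_. 0) (skew_one G \<iota>)
            (range (skew_emb G \<iota>))"
    show "finite (mor G) \<and> (\<exists>a\<in>center. \<exists>k\<in>objs G. trace_j G \<iota> \<alpha> k a = \<iota> k)"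
      by (rule dir1[OF assms(2) assms(5) sep])
  next
    assume "finite (mor G) \<and> (\<exists>a\<in>center. \<exists>k\<in>objs G. trace_j G \<iota> \<alpha> k a = \<iota> k)"
    then obtain a k where fM: "finite (mor G)" and aC: "a \<in> center" and k: "k \<in> objs G"
      and tk: "trace_j G \<iota> \<alpha> k a = \<iota> k" by blast
    have tk': "(\<Sum>g\<in>{g\<in>mor G. tgt G g = k}. \<alpha> g (a * \<iota> (src G g))) = \<iota> k"
      using trace_eq[OF fM k] tk by simp
    have tr: "\<And>e. e \<in> objs G \<Longrightarrow> (\<Sum>g\<in>{g\<in>mor G. tgt G g = e}. \<alpha> g (a * \<iota> (src G g))) = \<iota> e"
      using tr_all[OF assms(2) fM k tk'] by blast
    obtain gl where gl: "set gl = mor G" "distinct gl" using finite_distinct_list[OF fM] by blast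
    interpret sd G \<iota> \<alpha> a gl
      by (unfold_locales) (use aC fM tr gl in auto)
    show "separable_ext (skew_carrier G \<iota>) skew_add (skew_mult G \<alpha>) (\<lambda>_. 0) (skew_one G \<iota>)
            (range (skew_emb G \<iota>))" by (rule sep)
  qed
qed

end
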